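(* The Baumslag–Solitar group $\mathrm{BS}(2,3)=\langle a,b\mid b^{-1}a^2ba^{-3}\rangle$ is not Frobenius-stable.
   Context: Fix a non-principal ultrafilter $\mathcal U$ on $\mathbb N$. For a finitely presented $\Gamma=\langle S\mid R\rangle$ and a map $\varphi\colon S\to\mathrm U(k)$ (extended to the free group $\mathbb F_S$), $\mathrm{def}(\varphi)=\max_{r\in R}\|\varphi(r)-1_k\|_{\mathrm{Frob}}$ and $\mathrm{homdist}(\varphi)=\inf_{\rho\in\mathrm{Hom}(\Gamma,\mathrm U(k))}\max_{s\in S}\|\varphi(s)-\rho(s)\|_{\mathrm{Frob}}$, where $\|T\|_{\mathrm{Frob}}=\sqrt{\sum_{i,j}|T_{ij}|^2}$. $\Gamma$ is Frobenius-stable if for every sequence $(k_n)$ and maps $\varphi_n\colon S\to\mathrm U(k_n)$ with $\lim_{n\to\mathcal U}\mathrm{def}(\varphi_n)=0$ one has $\lim_{n\to\mathcal U}\mathrm{homdist}(\varphi_n)=0$. *)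

theory Defs
  imports Complex_Main "Jordan_Normal_Form.Matrix"
begin

definition nonprincipal_ultrafilter :: "nat filter \<Rightarrow> bool" where
  "nonprincipal_ultrafilter U \<longleftrightarrow>
     U \<noteq> bot \<and>
     (\<forall>P. eventually P U \<or> eventually (\<lambda>x. \<not> P x) U) \<and>
     (\<forall>m. eventually (\<lambda>x. x \<noteq> m) U)"

definition cadj :: "complex mat \<Rightarrow> complex mat" where
  "cadj A = mat (dim_col A) (dim_row A) (\<lambda>(i,j). cnj (A $$ (j,i)))"

definition unitary_mat :: "nat \<Rightarrow> complex mat \<Rightarrow> bool" where
  "unitary_mat k A \<longleftrightarrow> A \<in> carrier_mat k k \<and> A * cadj A = 1\<^sub>m k \<and> cadj A * A = 1\<^sub>m k"

definition frob_norm :: "complex mat \<Rightarrow> real" where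
  "frob_norm T = sqrt (\<Sum>i<dim_row T. \<Sum>j<dim_col T. (cmod (T $$ (i,j)))\<^sup>2)"

text \<open>Words in the free group on generators of type 's: a list of letters
  (s, inv), where inv = True means the letter s^{-1}.  A map phi from the
  generators to U(k) is extended to the free group; the inverse of a unitary
  is its conjugate transpose.\<close>
type_synonym 's word = "('s \<times> bool) list"

definition word_eval :: "nat \<Rightarrow> ('s \<Rightarrow> complex mat) \<Rightarrow> 's word \<Rightarrow> complex mat" where
  "word_eval k \<phi> w = foldr (\<lambda>(s, is_inv) M. (if is_inv then cadj (\<phi> s) else \<phi> s) * M) w (1\<^sub>m k)"

definition is_hom :: "nat \<Rightarrow> 's set \<Rightarrow> 's word list \<Rightarrow> ('s \<Rightarrow> complex mat) \<Rightarrow> bool" where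
  "is_hom k S R \<rho> \<longleftrightarrow> (\<forall>s\<in>S. unitary_mat k (\<rho> s)) \<and> (\<forall>r\<in>set R. word_eval k \<rho> r = 1\<^sub>m k)"

definition defect :: "nat \<Rightarrow> 's word list \<Rightarrow> ('s \<Rightarrow> complex mat) \<Rightarrow> real" where
  "defect k R \<phi> = Max (insert 0 ((\<lambda>r. frob_norm (word_eval k \<phi> r - 1\<^sub>m k)) ` set R))"

definition homdist :: "nat \<Rightarrow> 's set \<Rightarrow> 's word list \<Rightarrow> ('s \<Rightarrow> complex mat) \<Rightarrow> real" where
  "homdist k S R \<phi> = Inf {Max (insert 0 ((\<lambda>s. frob_norm (\<phi> s - \<rho> s)) ` S)) | \<rho>. is_hom k S R \<rho>}"

definition frobenius_stable :: "nat filter \<Rightarrow> 's set \<Rightarrow> 's word list \<Rightarrow> bool" where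
  "frobenius_stable U S R \<longleftrightarrow>
     (\<forall>(ks :: nat \<Rightarrow> nat) (\<phi>s :: nat \<Rightarrow> 's \<Rightarrow> complex mat).
        (\<forall>n. ks n \<ge> 1 \<and> (\<forall>s\<in>S. unitary_mat (ks n) (\<phi>s n s))) \<and>
        ((\<lambda>n. defect (ks n) R (\<phi>s n)) \<longlongrightarrow> 0) U
        \<longrightarrow> ((\<lambda>n. homdist (ks n) S R (\<phi>s n)) \<longlongrightarrow> 0) U)"

datatype bs_gen = Ga | Gb

definition bs23_rel :: "bs_gen word" where
  "bs23_rel = [(Gb, True), (Ga, False), (Ga, False), (Gb, False), (Ga, True), (Ga, True), (Ga, True)]"

end

theory Submission
  imports Defs "Jordan_Normal_Form.Jordan_Normal_Form_Existence" "Jordan_Normal_Form.Jordan_Normal_Form_Uniqueness"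
begin

lemma cube_root_unity_pow2:
  fixes r :: complex
  assumes r3: "r ^ 3 = 1" and rk: "r ^ (2 ^ k) = 1"
  shows "r = 1"
proof -
  have "r ^ (2 ^ k) = r ^ (2 ^ k mod 3)"
  proof -
    have "r ^ (2 ^ k) = r ^ (3 * (2 ^ k div 3) + 2 ^ k mod 3)" by simp
    also have "\<dots> = (r ^ 3) ^ (2 ^ k div 3) * r ^ (2 ^ k mod 3)"
      by (simp only: power_add power_mult)
    finally show ?thesis using r3 by simp
  qed
  moreover have "(2::nat) ^ k mod 3 \<noteq> 0"
  proof
    assume "(2::nat) ^ k mod 3 = 0"
    then have "(3::nat) dvd 2 ^ k" by auto
    then have "(3::nat) dvd 2" using prime_dvd_power[of "3::nat" 2 k] by auto
    then show False by simp
  qed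
  moreover have "(2::nat) ^ k mod 3 < 3" by simp
  ultimately have "r ^ (2 ^ k mod 3) = 1" "2 ^ k mod 3 = (1::nat) \<or> 2 ^ k mod 3 = (2::nat)"
    using rk by auto
  then show ?thesis
  proof (elim conjE disjE)
    assume a: "r ^ (2 ^ k mod 3) = 1" "(2::nat) ^ k mod 3 = 1" then show ?thesis by simp
  next
    assume a: "r ^ (2 ^ k mod 3) = 1" "(2::nat) ^ k mod 3 = 2"
    then have "r^2 = 1" by simp
    then have "r ^ 3 = r" by (simp add: power3_eq_cube power2_eq_square)
    then show ?thesis using r3 by simp
  qed
qed

lemma sq_cube_inj:
  fixes E :: "complex set"
  assumes fin: "finite E" and eq: "(\<lambda>x. x^2) ` E = (\<lambda>x. x^3) ` E"
  shows "inj_on (\<lambda>x. x^3) E"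
proof -
  define Ek where "Ek k = (\<lambda>x. x ^ (2^k)) ` E" for k
  have finEk: "finite (Ek k)" for k using fin unfolding Ek_def by auto
  have Ek_Suc: "Ek (Suc k) = (\<lambda>x. x^2) ` Ek k" for k
    unfolding Ek_def image_image by (simp add: power_mult[symmetric] mult.commute)
  have le: "card (Ek (Suc k)) \<le> card (Ek k)" for k
    unfolding Ek_Suc by (rule card_image_le[OF finEk])
  have "\<exists>k. card (Ek (Suc k)) = card (Ek k)"
  proof (rule ccontr)
    assume "\<not> ?thesis"
    then have lt: "card (Ek (Suc k)) < card (Ek k)" for k using le[of k] by fastforce
    have "card (Ek k) + k \<le> card (Ek 0)" for k
    proof (induction k)
      case (Suc k)
      then show ?case using lt[of k] by linarith
    qed simp
    from this[of "Suc (card (Ek 0))"] show False by simp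
  qed
  then obtain k where k: "card (Ek (Suc k)) = card (Ek k)" by blast
  have cube: "(\<lambda>x. x^3) ` Ek k = Ek (Suc k)"
  proof -
    have "(\<lambda>x. x^3) ` Ek k = (\<lambda>x. x ^ (2^k)) ` ((\<lambda>x. x^3) ` E)"
      unfolding Ek_def image_image by (simp add: power_mult[symmetric] mult.commute)
    also have "\<dots> = (\<lambda>x. x ^ (2^k)) ` ((\<lambda>x. x^2) ` E)" using eq by simp
    also have "\<dots> = Ek (Suc k)"
      unfolding Ek_def image_image by (simp add: power_mult[symmetric] mult.commute)
    finally show ?thesis .
  qed
  have injG: "inj_on (\<lambda>x. x^3) (Ek k)"
    using k cube by (intro eq_card_imp_inj_on[OF finEk]) simp
  show ?thesis
  proof (rule inj_onI)
    fix x y assume x: "x \<in> E" and y: "y \<in> E" and xy: "x^3 = y^3"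
    have "(x ^ (2^k))^3 = (y ^ (2^k))^3"
      using xy by (metis power_mult mult.commute)
    moreover have "x ^ (2^k) \<in> Ek k" "y ^ (2^k) \<in> Ek k" using x y unfolding Ek_def by auto
    ultimately have xyk: "x ^ (2^k) = y ^ (2^k)" using injG by (auto dest: inj_onD)
    show "x = y"
    proof (cases "y = 0")
      case True then show ?thesis using xy by simp
    next
      case False
      define r where "r = x / y"
      have "r ^ 3 = 1" using xy False unfolding r_def by (simp add: power_divide)
      moreover have "r ^ (2^k) = 1" using xyk False unfolding r_def by (simp add: power_divide)
      ultimately have "r = 1" by (rule cube_root_unity_pow2)
      then show ?thesis using False unfolding r_def by simp
    qed
  qed
qed


lemma cadj_dims[simp]: "dim_row (cadj A) = dim_col A" "dim_col (cadj A) = dim_row A"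
  unfolding cadj_def by auto

lemma cadj_carrier[simp]: "A \<in> carrier_mat n m \<Longrightarrow> cadj A \<in> carrier_mat m n"
  unfolding cadj_def by auto

lemma cadj_index[simp]: "i < dim_col A \<Longrightarrow> j < dim_row A \<Longrightarrow> cadj A $$ (i,j) = cnj (A $$ (j,i))"
  unfolding cadj_def by auto

lemma mult_mat_vec_index_sum:
  assumes "A \<in> carrier_mat n m" "x \<in> carrier_vec m" "i < n"
  shows "(A *\<^sub>v x) $ i = (\<Sum>k<m. A $$ (i,k) * x $ k)"
  using assms by (auto simp: scalar_prod_def lessThan_atLeast0 intro!: sum.cong)

lemma mult_mat_index_sum:
  assumes "A \<in> carrier_mat n m" "B \<in> carrier_mat m l" "i < n" "j < l"
  shows "(A * B) $$ (i,j) = (\<Sum>k<m. A $$ (i,k) * B $$ (k,j))"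
  using assms by (auto simp: scalar_prod_def lessThan_atLeast0 intro!: sum.cong)

definition ipv :: "nat \<Rightarrow> complex vec \<Rightarrow> complex vec \<Rightarrow> complex" where
  "ipv n x y = (\<Sum>i<n. x $ i * cnj (y $ i))"

lemma ipv_adj:
  assumes A: "A \<in> carrier_mat n n" and x: "x \<in> carrier_vec n" and y: "y \<in> carrier_vec n"
  shows "ipv n (A *\<^sub>v x) y = ipv n x (cadj A *\<^sub>v y)"
proof -
  have "ipv n (A *\<^sub>v x) y = (\<Sum>i<n. (\<Sum>k<n. A $$ (i,k) * x $ k) * cnj (y $ i))"
    unfolding ipv_def using A x by (intro sum.cong refl, subst mult_mat_vec_index_sum[OF A x], auto)
  also have "\<dots> = (\<Sum>i<n. \<Sum>k<n. A $$ (i,k) * x $ k * cnj (y $ i))"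
    by (simp add: sum_distrib_right)
  also have "\<dots> = (\<Sum>k<n. \<Sum>i<n. A $$ (i,k) * x $ k * cnj (y $ i))"
    by (rule sum.swap)
  also have "\<dots> = (\<Sum>k<n. x $ k * cnj (\<Sum>i<n. cnj (A $$ (i,k)) * y $ i))"
    by (simp add: sum_distrib_left mult_ac)
  also have "\<dots> = ipv n x (cadj A *\<^sub>v y)"
  proof -
    have "(cadj A *\<^sub>v y) $ k = (\<Sum>i<n. cnj (A $$ (i,k)) * y $ i)" if "k < n" for k
      using A y that by (subst mult_mat_vec_index_sum[of _ n n]) auto
    then show ?thesis unfolding ipv_def by simp
  qed
  finally show ?thesis .
qed

lemma ipv_self_zero:
  assumes w: "w \<in> carrier_vec n" and z: "ipv n w w = 0"
  shows "w = 0\<^sub>v n"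
proof -
  have "ipv n w w = (\<Sum>i<n. of_real ((cmod (w $ i))^2))"
    unfolding ipv_def by (intro sum.cong refl) (metis complex_norm_square)
  then have "ipv n w w = of_real (\<Sum>i<n. (cmod (w $ i))^2)" by simp
  then have "(\<Sum>i<n. (cmod (w $ i))^2) = 0" using z by (metis of_real_eq_0_iff)
  then have "\<forall>i\<in>{..<n}. (cmod (w $ i))^2 = 0"
    by (subst sum_nonneg_eq_0_iff[symmetric]) auto
  then show ?thesis using w by (intro eq_vecI) auto
qed

lemma char_matrix_mult_vec_index:
  assumes Z: "Z \<in> carrier_mat n n" and x: "x \<in> carrier_vec n" and i: "i < n"
  shows "(char_matrix Z e *\<^sub>v x) $ i = (Z *\<^sub>v x) $ i - e * x $ i"
proof -
  have "char_matrix Z e *\<^sub>v x = Z *\<^sub>v x + ((-e) \<cdot>\<^sub>m 1\<^sub>m n) *\<^sub>v x"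
    unfolding char_matrix_def using Z x
    by (subst add_mult_distrib_mat_vec[of _ n n]) auto
  then show ?thesis using Z x i by simp
qed

lemma unitary_kernel:
  assumes U: "unitary_mat n Z" and v: "v \<in> carrier_vec n"
  and h: "char_matrix Z e *\<^sub>v (char_matrix Z e *\<^sub>v v) = 0\<^sub>v n"
  shows "char_matrix Z e *\<^sub>v v = 0\<^sub>v n"
proof -
  from U have Z: "Z \<in> carrier_mat n n" and ZZ: "cadj Z * Z = 1\<^sub>m n"
    unfolding unitary_mat_def by auto
  define w where "w = char_matrix Z e *\<^sub>v v"
  have cm: "char_matrix Z e \<in> carrier_mat n n" using Z by (rule char_matrix_closed)
  have w: "w \<in> carrier_vec n" unfolding w_def using cm v by (rule mult_mat_vec_carrier)
  have Zw: "Z *\<^sub>v w = e \<cdot>\<^sub>v w"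
  proof (intro eq_vecI)
    fix i assume "i < dim_vec (e \<cdot>\<^sub>v w)"
    then have i: "i < n" using w by simp
    have "(char_matrix Z e *\<^sub>v w) $ i = 0" using h i unfolding w_def by simp
    then show "(Z *\<^sub>v w) $ i = (e \<cdot>\<^sub>v w) $ i"
      using char_matrix_mult_vec_index[OF Z w i, of e] i w by simp
  qed (use Z w in simp)
  show ?thesis
  proof (rule ccontr)
    assume "char_matrix Z e *\<^sub>v v \<noteq> 0\<^sub>v n"
    then have wn: "w \<noteq> 0\<^sub>v n" unfolding w_def .
    then have ww: "ipv n w w \<noteq> 0" using ipv_self_zero[OF w] by blast
    have Zw_c: "Z *\<^sub>v w \<in> carrier_vec n" using Z w by (rule mult_mat_vec_carrier)
    have bk: "cadj Z *\<^sub>v (Z *\<^sub>v w) = w"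
    proof -
      have "cadj Z *\<^sub>v (Z *\<^sub>v w) = (cadj Z * Z) *\<^sub>v w"
        using Z w by (intro assoc_mult_mat_vec[symmetric, of _ n n _ n]) auto
      then show ?thesis using ZZ w by simp
    qed
    have "ipv n (Z *\<^sub>v w) (Z *\<^sub>v w) = ipv n w (cadj Z *\<^sub>v (Z *\<^sub>v w))"
      using ipv_adj[OF Z w Zw_c] .
    then have "ipv n (e \<cdot>\<^sub>v w) (e \<cdot>\<^sub>v w) = ipv n w w" using Zw bk by simp
    moreover have "ipv n (e \<cdot>\<^sub>v w) (e \<cdot>\<^sub>v w) = e * cnj e * ipv n w w"
      unfolding ipv_def using w by (simp add: sum_distrib_left mult_ac)
    ultimately have ee: "e * cnj e = 1" using ww by simp
    have w2: "w = e \<cdot>\<^sub>v (cadj Z *\<^sub>v w)"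
    proof -
      have "w = cadj Z *\<^sub>v (Z *\<^sub>v w)" using bk by simp
      also have "\<dots> = e \<cdot>\<^sub>v (cadj Z *\<^sub>v w)" unfolding Zw
        using Z w by (intro mult_mat_vec[of _ n n]) auto
      finally show ?thesis .
    qed
    have adjw: "cadj Z *\<^sub>v w = cnj e \<cdot>\<^sub>v w"
    proof -
      have "cnj e \<cdot>\<^sub>v w = (cnj e * e) \<cdot>\<^sub>v (cadj Z *\<^sub>v w)"
        by (subst w2) (simp add: smult_smult_assoc)
      also have "cnj e * e = 1" using ee by (simp add: mult.commute)
      finally show ?thesis by simp
    qed
    have wi: "w $ i = (Z *\<^sub>v v) $ i - e * v $ i" if "i < n" for i
      unfolding w_def using char_matrix_mult_vec_index[OF Z v that] .
    have "ipv n w w = ipv n (Z *\<^sub>v v) w - e * ipv n v w"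
      unfolding ipv_def
      by (simp add: wi sum_distrib_left sum_subtractf[symmetric] algebra_simps)
    also have "ipv n (Z *\<^sub>v v) w = ipv n v (cnj e \<cdot>\<^sub>v w)"
      using ipv_adj[OF Z v w] adjw by simp
    also have "\<dots> = e * ipv n v w"
      unfolding ipv_def using w by (simp add: sum_distrib_left mult_ac)
    finally have "ipv n w w = 0" by simp
    with ww show False by simp
  qed
qed


lemma jordan_matrix_ones:
  assumes "\<forall>(k,e)\<in>set n_as. k = 1"
  shows "jordan_matrix n_as = mat (length n_as) (length n_as) (\<lambda>(i,j). if i = j then snd (n_as ! i) else 0)"
  using assms
proof (induction n_as)
  case Nil
  then show ?case unfolding jordan_matrix_def by (intro eq_matI) auto
next
  case (Cons ke n_as)
  obtain k e where ke: "ke = (k,e)" by force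
  with Cons have k: "k = 1" by auto
  have s: "sum_list (map fst n_as) = length n_as"
    using Cons.prems by (induction n_as) auto
  have IH: "jordan_matrix n_as = mat (length n_as) (length n_as) (\<lambda>(i,j). if i = j then snd (n_as ! i) else 0)"
    using Cons by auto
  show ?case unfolding ke k jordan_matrix_Cons s IH
    by (intro eq_matI) (auto simp: nth_Cons')
qed

lemma kernel_dim_cong:
  assumes "mat_kernel A = mat_kernel B" "dim_col A = dim_col B"
  shows "kernel_dim A = kernel_dim B"
  unfolding kernel_dim_def using assms by simp

lemma list_sum_le_eq:
  fixes f g :: "'a \<Rightarrow> nat"
  assumes "\<forall>x\<in>set xs. f x \<le> g x" "sum_list (map f xs) = sum_list (map g xs)"
  shows "\<forall>x\<in>set xs. f x = g x"
  using assms
proof (induction xs)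
  case (Cons a xs)
  have "sum_list (map f xs) \<le> sum_list (map g xs)"
    using Cons.prems(1) by (intro sum_list_mono) auto
  then show ?case using Cons by auto
qed simp

lemma unitary_jordan_ones:
  assumes U: "unitary_mat n Z" and jnf: "jordan_nf Z n_as"
  shows "\<forall>(k,e)\<in>set n_as. k = 1"
proof -
  from U have Z: "Z \<in> carrier_mat n n" unfolding unitary_mat_def by auto
  have dims: "dim_gen_eigenspace Z e 2 = dim_gen_eigenspace Z e 1" for e
  proof -
    let ?M = "char_matrix Z e"
    have M: "?M \<in> carrier_mat n n" using Z by simp
    have p2: "?M ^\<^sub>m 2 = ?M * ?M" using M by (simp add: numeral_2_eq_2)
    have p1: "?M ^\<^sub>m 1 = ?M" using M by simp
    have "mat_kernel (?M * ?M) = mat_kernel ?M"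
    proof
      show "mat_kernel ?M \<subseteq> mat_kernel (?M * ?M)" using mat_kernel_mult_subset[OF M M] .
      show "mat_kernel (?M * ?M) \<subseteq> mat_kernel ?M"
      proof
        fix v assume v: "v \<in> mat_kernel (?M * ?M)"
        have MM: "?M * ?M \<in> carrier_mat n n" using M by simp
        from mat_kernelD[OF MM v] have vc: "v \<in> carrier_vec n" and z: "?M * ?M *\<^sub>v v = 0\<^sub>v n" by auto
        have "?M *\<^sub>v (?M *\<^sub>v v) = 0\<^sub>v n" using z M vc by simp
        from unitary_kernel[OF U vc this] show "v \<in> mat_kernel ?M"
          using M vc by (intro mat_kernelI) auto
      qed
    qed
    then show ?thesis unfolding dim_gen_eigenspace_def p1 p2
      by (intro kernel_dim_cong) (use M in auto)
  qed
  have "\<forall>x\<in>set (map fst [(k, e')\<leftarrow>n_as . e' = e]). min 1 x = min 2 x" for e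
    using dims[of e] unfolding dim_gen_eigenspace[OF jnf]
    by (intro list_sum_le_eq) auto
  then have "k \<le> 1" if "(k,e) \<in> set n_as" for k e
    using that by fastforce
  moreover have "k \<noteq> 0" if "(k,e) \<in> set n_as" for k e
    using jnf that unfolding jordan_nf_def by force
  ultimately show ?thesis by fastforce
qed


definition dmat :: "nat \<Rightarrow> (nat \<Rightarrow> complex) \<Rightarrow> complex mat" where
  "dmat n d = mat n n (\<lambda>(i,j). if i = j then d i else 0)"

lemma dmat_carrier[simp]: "dmat n d \<in> carrier_mat n n" unfolding dmat_def by simp
lemma dmat_dims[simp]: "dim_row (dmat n d) = n" "dim_col (dmat n d) = n" unfolding dmat_def by simp_all
lemma dmat_index[simp]: "i < n \<Longrightarrow> j < n \<Longrightarrow> dmat n d $$ (i,j) = (if i = j then d i else 0)"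
  unfolding dmat_def by simp

lemma dmat_mult_left:
  assumes X: "X \<in> carrier_mat n m" and i: "i < n" and j: "j < m"
  shows "(dmat n d * X) $$ (i,j) = d i * X $$ (i,j)"
proof -
  have "(dmat n d * X) $$ (i,j) = (\<Sum>k<n. dmat n d $$ (i,k) * X $$ (k,j))"
    using X i j by (intro mult_mat_index_sum) auto
  also have "\<dots> = (\<Sum>k<n. (if k = i then d i * X $$ (i,j) else 0))"
    using i by (intro sum.cong refl) auto
  finally show ?thesis using i by simp
qed

lemma dmat_mult_right:
  assumes X: "X \<in> carrier_mat m n" and i: "i < m" and j: "j < n"
  shows "(X * dmat n d) $$ (i,j) = X $$ (i,j) * d j"
proof -
  have "(X * dmat n d) $$ (i,j) = (\<Sum>k<n. X $$ (i,k) * dmat n d $$ (k,j))"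
    using X i j by (intro mult_mat_index_sum) auto
  also have "\<dots> = (\<Sum>k<n. (if k = j then X $$ (i,j) * d j else 0))"
    using j by (intro sum.cong refl) auto
  finally show ?thesis using j by simp
qed

lemma dmat_pow: "dmat n d ^\<^sub>m k = dmat n (\<lambda>i. d i ^ k)"
proof (induction k)
  case 0 then show ?case by (intro eq_matI) auto
next
  case (Suc k)
  show ?case
  proof (intro eq_matI)
    fix i j assume i: "i < dim_row (dmat n (\<lambda>i. d i ^ Suc k))" and j: "j < dim_col (dmat n (\<lambda>i. d i ^ Suc k))"
    then have i: "i < n" and j: "j < n" by auto
    show "(dmat n d ^\<^sub>m Suc k) $$ (i, j) = dmat n (\<lambda>i. d i ^ Suc k) $$ (i, j)"
      using dmat_mult_right[of "dmat n (\<lambda>i. d i ^ k)" n n i j d] i j by (simp add: Suc)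
  qed (auto simp: Suc)
qed

lemma poly_linear_prod_zero:
  "poly (\<Prod>a\<leftarrow>xs. [:- a, 1:]) (x :: complex) = 0 \<longleftrightarrow> x \<in> set xs"
  by (induction xs) auto

lemma char_poly_dmat: "char_poly (dmat n d) = (\<Prod>a\<leftarrow>map d [0..<n]. [:- a, 1:])"
proof -
  have ut: "upper_triangular (dmat n d)" unfolding upper_triangular_def by auto
  have "diag_mat (dmat n d) = map d [0..<n]" unfolding diag_mat_def by auto
  then show ?thesis using char_poly_upper_triangular[OF dmat_carrier ut] by simp
qed

lemma unitary_diagonalizable:
  assumes U: "unitary_mat n Z"
  shows "\<exists>P Q d. similar_mat_wit Z (dmat n d) P Q"
proof -
  from U have Z: "Z \<in> carrier_mat n n" unfolding unitary_mat_def by auto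
  obtain as where "char_poly Z = (\<Prod>a\<leftarrow>as. [:- a, 1:])" using char_poly_factorized[OF Z] by blast
  from jordan_nf_exists[OF Z this] obtain n_as where jnf: "jordan_nf Z n_as" by blast
  have ones: "\<forall>(k,e)\<in>set n_as. k = 1" using unitary_jordan_ones[OF U jnf] .
  from jnf obtain P Q where wit: "similar_mat_wit Z (jordan_matrix n_as) P Q"
    unfolding jordan_nf_def similar_mat_def by blast
  have "jordan_matrix n_as \<in> carrier_mat n n"
    using similar_mat_witD2(5)[OF Z wit] .
  then have len: "length n_as = n" unfolding jordan_matrix_ones[OF ones] by auto
  have "jordan_matrix n_as = dmat n (\<lambda>i. snd (n_as ! i))"
    unfolding jordan_matrix_ones[OF ones] len dmat_def ..
  then show ?thesis using wit by metis
qed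

lemma assoc_dim:
  assumes "dim_col A = dim_row B" "dim_col B = dim_row C"
  shows "A * B * C = A * (B * C)"
proof -
  have a: "A \<in> carrier_mat (dim_row A) (dim_row B)" using assms(1) unfolding carrier_mat_def by simp
  have b: "B \<in> carrier_mat (dim_row B) (dim_row C)" using assms(2) unfolding carrier_mat_def by simp
  have c: "C \<in> carrier_mat (dim_row C) (dim_col C)" unfolding carrier_mat_def by simp
  show ?thesis using assoc_mult_mat[OF a b c] .
qed

lemma bs_commute:
  assumes UZ: "unitary_mat n Z" and UB: "unitary_mat n B"
  and rel: "cadj B * (Z * Z) * B = Z * Z * Z"
  shows "Z * (cadj B * Z * B) = (cadj B * Z * B) * Z"
proof -
  from UZ have Z: "Z \<in> carrier_mat n n" unfolding unitary_mat_def by auto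
  from UB have B: "B \<in> carrier_mat n n" and BB: "B * cadj B = 1\<^sub>m n" and BB': "cadj B * B = 1\<^sub>m n"
    unfolding unitary_mat_def by auto
  have Ba: "cadj B \<in> carrier_mat n n" using B by simp
  obtain P Q d where wit: "similar_mat_wit Z (dmat n d) P Q"
    using unitary_diagonalizable[OF UZ] by blast
  note W = similar_mat_witD2[OF Z wit]
  have P: "P \<in> carrier_mat n n" and Q: "Q \<in> carrier_mat n n"
    and PQ: "P * Q = 1\<^sub>m n" and QP: "Q * P = 1\<^sub>m n" and ZPQ: "Z = P * dmat n d * Q"
    using W by blast+
  have Z2: "Z ^\<^sub>m 2 = Z * Z" using Z by (simp add: numeral_2_eq_2)
  have Z3: "Z ^\<^sub>m 3 = Z * Z * Z" using Z by (simp add: numeral_3_eq_3)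
  have wit2: "similar_mat_wit (Z ^\<^sub>m 2) (dmat n d ^\<^sub>m 2) P Q" by (rule similar_mat_wit_pow[OF wit])
  have wit3: "similar_mat_wit (Z ^\<^sub>m 3) (dmat n d ^\<^sub>m 3) P Q" by (rule similar_mat_wit_pow[OF wit])
  have wit23: "similar_mat_wit (Z ^\<^sub>m 3) (Z ^\<^sub>m 2) (cadj B) B"
  proof -
    have c2: "Z ^\<^sub>m 2 \<in> carrier_mat n n" and c3: "Z ^\<^sub>m 3 \<in> carrier_mat n n" using Z by auto
    then have d3: "dim_row (Z ^\<^sub>m 3) = n" by auto
    show ?thesis unfolding similar_mat_wit_def Let_def d3
      using c2 c3 Ba B BB BB' by (simp add: Z2 Z3 rel)
  qed
  have "char_poly (dmat n d ^\<^sub>m 2) = char_poly (dmat n d ^\<^sub>m 3)"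
  proof -
    have "char_poly (dmat n d ^\<^sub>m 2) = char_poly (Z ^\<^sub>m 2)"
      by (rule char_poly_similar[symmetric]) (use wit2 in \<open>auto simp: similar_mat_def\<close>)
    also have "\<dots> = char_poly (Z ^\<^sub>m 3)"
      by (rule char_poly_similar[symmetric]) (use wit23 in \<open>auto simp: similar_mat_def\<close>)
    also have "\<dots> = char_poly (dmat n d ^\<^sub>m 3)"
      by (rule char_poly_similar) (use wit3 in \<open>auto simp: similar_mat_def\<close>)
    finally show ?thesis .
  qed
  then have e: "(\<Prod>a\<leftarrow>map (\<lambda>i. d i ^ 2) [0..<n]. [:-a,1:]) = (\<Prod>a\<leftarrow>map (\<lambda>i. d i ^ 3) [0..<n]. [:-a,1:])"
    unfolding dmat_pow char_poly_dmat by simp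
  have "set (map (\<lambda>i. d i ^ 2) [0..<n]) = set (map (\<lambda>i. d i ^ 3) [0..<n])"
  proof (rule Set.set_eqI)
    fix x
    show "x \<in> set (map (\<lambda>i. d i ^ 2) [0..<n]) \<longleftrightarrow> x \<in> set (map (\<lambda>i. d i ^ 3) [0..<n])"
      using arg_cong[OF e, of "\<lambda>p. poly p x = 0"] unfolding poly_linear_prod_zero .
  qed
  then have "(\<lambda>x. x^2) ` (d ` {..<n}) = (\<lambda>x. x^3) ` (d ` {..<n})"
    by (simp add: image_image lessThan_atLeast0)
  from sq_cube_inj[OF _ this] have inj: "inj_on (\<lambda>x. x^3) (d ` {..<n})" by simp
  define C where "C = cadj B * Z * B"
  have dimsZB: "dim_row Z = n" "dim_col Z = n" "dim_row B = n" "dim_col B = n"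
    "dim_row P = n" "dim_col P = n" "dim_row Q = n" "dim_col Q = n" using Z B P Q by auto
  have C: "C \<in> carrier_mat n n" unfolding C_def using mult_carrier_mat[OF mult_carrier_mat[OF Ba Z] B] .
  note dims = dimsZB
  have CC: "C * C = Z * Z * Z"
  proof -
    have "C * C = cadj B * Z * (B * cadj B) * Z * B"
      unfolding C_def by (simp add: assoc_dim dims)
    also have "\<dots> = cadj B * (Z * Z) * B" unfolding BB by (simp add: assoc_dim dims)
    finally show ?thesis using rel by simp
  qed
  define C' where "C' = Q * C * P"
  have C': "C' \<in> carrier_mat n n" unfolding C'_def using C P Q by simp
  define D where "D = dmat n d"
  have D: "D \<in> carrier_mat n n" unfolding D_def by simp
  have dC: "dim_row C = n" "dim_col C = n" "dim_row C' = n" "dim_col C' = n" "dim_row D = n" "dim_col D = n"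
    using C C' D by auto
  note dims = dimsZB dC
  have D3: "D ^\<^sub>m 3 = D * D * D" using D by (simp add: numeral_3_eq_3)
  have ZD: "Z = P * D * Q" unfolding D_def by (rule ZPQ)
  have CP: "C = P * C' * Q"
  proof -
    have "P * C' * Q = (P * Q) * C * (P * Q)" unfolding C'_def by (simp add: assoc_dim dims)
    then show ?thesis unfolding PQ by (simp add: assoc_dim dims)
  qed
  have Z3D: "Z * Z * Z = P * (D * D * D) * Q"
  proof -
    have "Z * Z * Z = P * D * (Q * P) * D * (Q * P) * D * Q" unfolding ZD by (simp add: assoc_dim dims)
    then show ?thesis unfolding QP by (simp add: assoc_dim dims)
  qed
  have comm3: "(D * D * D) * C' = C' * (D * D * D)"
  proof -
    have "C * (Z * Z * Z) = (Z * Z * Z) * C"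
      unfolding CC[symmetric] by (simp add: assoc_dim dims)
    then have "Q * (C * (Z * Z * Z)) * P = Q * ((Z * Z * Z) * C) * P" by simp
    moreover have "Q * (C * (Z * Z * Z)) * P = C' * (D * D * D)"
    proof -
      have "Q * (C * (Z * Z * Z)) * P = (Q * P) * C' * (Q * P) * (D * D * D) * (Q * P)"
        unfolding CP Z3D by (simp add: assoc_dim dims)
      then show ?thesis unfolding QP by (simp add: assoc_dim dims)
    qed
    moreover have "Q * ((Z * Z * Z) * C) * P = (D * D * D) * C'"
    proof -
      have "Q * ((Z * Z * Z) * C) * P = (Q * P) * (D * D * D) * (Q * P) * C' * (Q * P)"
        unfolding CP Z3D by (simp add: assoc_dim dims)
      then show ?thesis unfolding QP by (simp add: assoc_dim dims)
    qed
    ultimately show ?thesis by simp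
  qed
  have DC: "D * C' = C' * D"
  proof (intro eq_matI)
    fix i j assume "i < dim_row (C' * D)" "j < dim_col (C' * D)"
    then have i: "i < n" and j: "j < n" using C' D by auto
    have "(D * D * D) = dmat n (\<lambda>i. d i ^ 3)" using D3 unfolding D_def dmat_pow by simp
    then have "d i ^ 3 * C' $$ (i,j) = C' $$ (i,j) * d j ^ 3"
      using comm3 dmat_mult_left[OF C' i j] dmat_mult_right[OF C' i j] by metis
    then have "C' $$ (i,j) = 0 \<or> d i ^ 3 = d j ^ 3" by (simp add: mult.commute)
    then have "C' $$ (i,j) = 0 \<or> d i = d j"
      using inj i j by (auto dest: inj_onD)
    then show "(D * C') $$ (i, j) = (C' * D) $$ (i, j)"
      unfolding D_def using dmat_mult_left[OF C' i j] dmat_mult_right[OF C' i j] by auto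
  qed (use C' D in auto)
  have "Z * C = P * (D * C') * Q"
  proof -
    have "Z * C = P * D * (Q * P) * C' * Q" unfolding ZD CP by (simp add: assoc_dim dims)
    then show ?thesis unfolding QP by (simp add: assoc_dim dims)
  qed
  also have "\<dots> = P * (C' * D) * Q" unfolding DC ..
  also have "\<dots> = C * Z"
  proof -
    have "C * Z = P * C' * (Q * P) * D * Q" unfolding ZD CP by (simp add: assoc_dim dims)
    then show ?thesis unfolding QP by (simp add: assoc_dim dims)
  qed
  finally show ?thesis unfolding C_def .
qed


lemma minkowski:
  fixes f g :: "'a \<Rightarrow> real"
  assumes "finite A"
  shows "sqrt (\<Sum>x\<in>A. (f x + g x)^2) \<le> sqrt (\<Sum>x\<in>A. (f x)^2) + sqrt (\<Sum>x\<in>A. (g x)^2)"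
  using assms
proof (induction A rule: finite_induct)
  case empty then show ?case by simp
next
  case (insert a A)
  define x where "x = sqrt (\<Sum>x\<in>A. (f x)^2)"
  define y where "y = sqrt (\<Sum>x\<in>A. (g x)^2)"
  have x0: "x \<ge> 0" and y0: "y \<ge> 0" unfolding x_def y_def by (auto intro: sum_nonneg)
  have S0: "0 \<le> (\<Sum>x\<in>A. (f x + g x)^2)" by (auto intro: sum_nonneg)
  have "(\<Sum>x\<in>A. (f x + g x)^2) \<le> (x + y)^2"
  proof -
    have "sqrt (\<Sum>x\<in>A. (f x + g x)^2) \<le> x + y" using insert.IH unfolding x_def y_def .
    then have "(sqrt (\<Sum>x\<in>A. (f x + g x)^2))^2 \<le> (x + y)^2"
      using S0 by (intro power_mono) auto
    then show ?thesis using S0 by simp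
  qed
  then have "sqrt (\<Sum>x\<in>insert a A. (f x + g x)^2) \<le> sqrt ((f a + g a)^2 + (x + y)^2)"
    using insert by simp
  also have "\<dots> \<le> sqrt ((f a)^2 + x^2) + sqrt ((g a)^2 + y^2)"
    by (rule real_sqrt_sum_squares_triangle_ineq)
  also have "x^2 = (\<Sum>x\<in>A. (f x)^2)" unfolding x_def by (simp add: sum_nonneg)
  also have "y^2 = (\<Sum>x\<in>A. (g x)^2)" unfolding y_def by (simp add: sum_nonneg)
  finally show ?case using insert by simp
qed

lemma frob_norm_alt:
  "frob_norm T = sqrt (\<Sum>p\<in>{..<dim_row T} \<times> {..<dim_col T}. (cmod (T $$ p))^2)"
  unfolding frob_norm_def by (simp add: sum.cartesian_product)

lemma frob_norm_nonneg: "frob_norm T \<ge> 0"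
  unfolding frob_norm_def by (auto intro!: sum_nonneg)

lemma frob_norm_sq: "(frob_norm T)^2 = (\<Sum>i<dim_row T. \<Sum>j<dim_col T. (cmod (T $$ (i,j)))^2)"
  unfolding frob_norm_def by (simp add: sum_nonneg)

lemma frob_norm_entry:
  assumes "i < dim_row T" "j < dim_col T"
  shows "cmod (T $$ (i,j)) \<le> frob_norm T"
proof -
  have "(cmod (T $$ (i,j)))^2 \<le> (\<Sum>p\<in>{..<dim_row T} \<times> {..<dim_col T}. (cmod (T $$ p))^2)"
    using assms by (intro member_le_sum[where f = "\<lambda>p. (cmod (T $$ p))^2"]) auto
  then have "sqrt ((cmod (T $$ (i,j)))^2) \<le> frob_norm T"
    unfolding frob_norm_alt by (rule real_sqrt_le_mono)
  then show ?thesis by simp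
qed

lemma frob_norm_triangle:
  assumes "dim_row X = dim_row Y" "dim_col X = dim_col Y"
  shows "frob_norm (X + Y) \<le> frob_norm X + frob_norm Y"
proof -
  let ?I = "{..<dim_row Y} \<times> {..<dim_col Y}"
  have "frob_norm (X + Y) = sqrt (\<Sum>p\<in>?I. (cmod ((X + Y) $$ p))^2)"
    unfolding frob_norm_alt by simp
  also have "\<dots> \<le> sqrt (\<Sum>p\<in>?I. (cmod (X $$ p) + cmod (Y $$ p))^2)"
  proof (intro real_sqrt_le_mono sum_mono)
    fix p assume "p \<in> ?I"
    then have "(X + Y) $$ p = X $$ p + Y $$ p" by (cases p) auto
    then have "cmod ((X + Y) $$ p) \<le> cmod (X $$ p) + cmod (Y $$ p)" by (simp add: norm_triangle_ineq)
    then show "(cmod ((X + Y) $$ p))^2 \<le> (cmod (X $$ p) + cmod (Y $$ p))^2"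
      by (intro power_mono) auto
  qed
  also have "\<dots> \<le> sqrt (\<Sum>p\<in>?I. (cmod (X $$ p))^2) + sqrt (\<Sum>p\<in>?I. (cmod (Y $$ p))^2)"
    by (rule minkowski) auto
  also have "\<dots> = frob_norm X + frob_norm Y" unfolding frob_norm_alt assms by simp
  finally show ?thesis .
qed

lemma frob_norm_uminus: "frob_norm (- X) = frob_norm X"
  unfolding frob_norm_def by simp

lemma frob_norm_minus_triangle:
  assumes "dim_row X = dim_row Y" "dim_col X = dim_col Y"
  shows "frob_norm (X - Y) \<le> frob_norm X + frob_norm Y"
proof -
  have "X - Y = X + (- Y)" by (intro eq_matI) (use assms in auto)
  then show ?thesis using frob_norm_triangle[of X "- Y"] assms by (simp add: frob_norm_uminus)
qed

lemma frob_norm_minus_commute: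
  assumes "dim_row X = dim_row Y" "dim_col X = dim_col Y"
  shows "frob_norm (X - Y) = frob_norm (Y - X)"
proof -
  have "Y - X = - (X - Y)" by (intro eq_matI) (use assms in auto)
  then show ?thesis by (simp add: frob_norm_uminus)
qed

lemma cadj_cadj[simp]: "cadj (cadj A) = A"
  by (intro eq_matI) auto

lemma cadj_minus:
  assumes "dim_row X = dim_row Y" "dim_col X = dim_col Y"
  shows "cadj (X - Y) = cadj X - cadj Y"
  by (intro eq_matI) (use assms in auto)

lemma cadj_one[simp]: "cadj (1\<^sub>m n) = 1\<^sub>m n"
  by (intro eq_matI) auto

lemma cadj_mult:
  assumes A: "A \<in> carrier_mat n m" and B: "B \<in> carrier_mat m l"
  shows "cadj (A * B) = cadj B * cadj A"
proof (intro eq_matI)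
  fix i j assume "i < dim_row (cadj B * cadj A)" "j < dim_col (cadj B * cadj A)"
  then have i: "i < l" and j: "j < n" using A B by auto
  have "cadj (A * B) $$ (i,j) = cnj ((A * B) $$ (j,i))" using A B i j by simp
  also have "\<dots> = cnj (\<Sum>k<m. A $$ (j,k) * B $$ (k,i))" by (simp only: mult_mat_index_sum[OF A B j i])
  also have "\<dots> = (\<Sum>k<m. cadj B $$ (i,k) * cadj A $$ (k,j))"
    using A B i j by (simp add: mult.commute)
  also have "\<dots> = (cadj B * cadj A) $$ (i,j)"
    using A B i j by (subst mult_mat_index_sum[of _ l m _ n]) auto
  finally show "cadj (A * B) $$ (i,j) = (cadj B * cadj A) $$ (i,j)" .
qed (use A B in auto)

lemma frob_norm_cadj: "frob_norm (cadj A) = frob_norm A"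
proof -
  have "(\<Sum>i<dim_col A. \<Sum>j<dim_row A. (cmod (cadj A $$ (i,j)))^2) = (\<Sum>i<dim_col A. \<Sum>j<dim_row A. (cmod (A $$ (j,i)))^2)"
    by (intro sum.cong refl) simp
  also have "\<dots> = (\<Sum>j<dim_row A. \<Sum>i<dim_col A. (cmod (A $$ (j,i)))^2)" by (rule sum.swap)
  finally show ?thesis unfolding frob_norm_def by simp
qed

lemma unitary_carrier: "unitary_mat n U \<Longrightarrow> U \<in> carrier_mat n n"
  unfolding unitary_mat_def by simp

lemma unitary_cadj: "unitary_mat n U \<Longrightarrow> unitary_mat n (cadj U)"
  unfolding unitary_mat_def by auto

lemma unitary_mult:
  assumes U: "unitary_mat n U" and V: "unitary_mat n V"
  shows "unitary_mat n (U * V)"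
proof -
  from U V have Uc: "U \<in> carrier_mat n n" and Vc: "V \<in> carrier_mat n n"
    and U1: "U * cadj U = 1\<^sub>m n" and U2: "cadj U * U = 1\<^sub>m n"
    and V1: "V * cadj V = 1\<^sub>m n" and V2: "cadj V * V = 1\<^sub>m n"
    unfolding unitary_mat_def by auto
  have Ua: "cadj U \<in> carrier_mat n n" and Va: "cadj V \<in> carrier_mat n n" using Uc Vc by auto
  have d: "dim_row U = n" "dim_col U = n" "dim_row V = n" "dim_col V = n" using Uc Vc by auto
  have "U * V * cadj (U * V) = U * (V * cadj V) * cadj U"
    unfolding cadj_mult[OF Uc Vc] by (simp add: assoc_dim d)
  also have "\<dots> = 1\<^sub>m n" unfolding V1 using U1 Uc by simp
  finally have 1: "U * V * cadj (U * V) = 1\<^sub>m n" .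
  have "cadj (U * V) * (U * V) = cadj V * (cadj U * U) * V"
    unfolding cadj_mult[OF Uc Vc] by (simp add: assoc_dim d)
  also have "\<dots> = 1\<^sub>m n" unfolding U2 using V2 Vc by simp
  finally have 2: "cadj (U * V) * (U * V) = 1\<^sub>m n" .
  show ?thesis unfolding unitary_mat_def using 1 2 Uc Vc by auto
qed

lemma unitary_one: "unitary_mat n (1\<^sub>m n)"
  unfolding unitary_mat_def by simp

lemma ipv_self_real: "ipv n v v = of_real (\<Sum>i<n. (cmod (v $ i))^2)"
proof -
  have "ipv n v v = (\<Sum>i<n. of_real ((cmod (v $ i))^2))"
    unfolding ipv_def by (intro sum.cong refl) (metis complex_norm_square)
  then show ?thesis by simp
qed

lemma frob_norm_unitary_left:
  assumes U: "unitary_mat n U" and X: "X \<in> carrier_mat n m"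
  shows "frob_norm (U * X) = frob_norm X"
proof -
  from U have Uc: "U \<in> carrier_mat n n" and U2: "cadj U * U = 1\<^sub>m n"
    unfolding unitary_mat_def by auto
  have col: "(\<Sum>i<n. (cmod ((U * X) $$ (i,j)))^2) = (\<Sum>i<n. (cmod (X $$ (i,j)))^2)" if j: "j < m" for j
  proof -
    have cx: "col X j \<in> carrier_vec n" using X by auto
    have cux: "col (U * X) j = U *\<^sub>v col X j" by (rule col_mult2[OF Uc X j])
    have cuxc: "U *\<^sub>v col X j \<in> carrier_vec n" using Uc cx by simp
    have "ipv n (U *\<^sub>v col X j) (U *\<^sub>v col X j) = ipv n (col X j) (cadj U *\<^sub>v (U *\<^sub>v col X j))"
      by (rule ipv_adj[OF Uc cx cuxc])
    also have "cadj U *\<^sub>v (U *\<^sub>v col X j) = col X j"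
    proof -
      have "cadj U *\<^sub>v (U *\<^sub>v col X j) = (cadj U * U) *\<^sub>v col X j"
        using Uc cx by (intro assoc_mult_mat_vec[symmetric, of _ n n _ n]) auto
      then show ?thesis using U2 cx by simp
    qed
    finally have e: "ipv n (col (U * X) j) (col (U * X) j) = ipv n (col X j) (col X j)" using cux by simp
    have "(\<Sum>i<n. (cmod (col (U * X) j $ i))^2) = (\<Sum>i<n. (cmod (col X j $ i))^2)"
      using e unfolding ipv_self_real of_real_eq_iff .
    moreover have "(\<Sum>i<n. (cmod (col (U * X) j $ i))^2) = (\<Sum>i<n. (cmod ((U * X) $$ (i,j)))^2)"
      using Uc X j by (intro sum.cong refl) auto
    moreover have "(\<Sum>i<n. (cmod (col X j $ i))^2) = (\<Sum>i<n. (cmod (X $$ (i,j)))^2)"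
      using X j by (intro sum.cong refl) auto
    ultimately show ?thesis by simp
  qed
  have "(frob_norm (U * X))^2 = (frob_norm X)^2"
  proof -
    have "(frob_norm (U * X))^2 = (\<Sum>i<n. \<Sum>j<m. (cmod ((U * X) $$ (i,j)))^2)"
      unfolding frob_norm_sq using Uc X by simp
    also have "\<dots> = (\<Sum>j<m. \<Sum>i<n. (cmod ((U * X) $$ (i,j)))^2)" by (rule sum.swap)
    also have "\<dots> = (\<Sum>j<m. \<Sum>i<n. (cmod (X $$ (i,j)))^2)" using col by simp
    also have "\<dots> = (\<Sum>i<n. \<Sum>j<m. (cmod (X $$ (i,j)))^2)" by (rule sum.swap)
    also have "\<dots> = (frob_norm X)^2" unfolding frob_norm_sq using X by simp
    finally show ?thesis .
  qed
  then show ?thesis using frob_norm_nonneg[of "U * X"] frob_norm_nonneg[of X]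
    by (metis power2_eq_imp_eq)
qed

lemma frob_norm_unitary_right:
  assumes U: "unitary_mat m U" and X: "X \<in> carrier_mat n m"
  shows "frob_norm (X * U) = frob_norm X"
proof -
  have Uc: "U \<in> carrier_mat m m" using U unitary_carrier by auto
  have "frob_norm (X * U) = frob_norm (cadj (X * U))" by (simp add: frob_norm_cadj)
  also have "cadj (X * U) = cadj U * cadj X" by (rule cadj_mult[OF X Uc])
  also have "frob_norm \<dots> = frob_norm (cadj X)"
    by (rule frob_norm_unitary_left[OF unitary_cadj[OF U], of "cadj X" n]) (use X in simp)
  also have "\<dots> = frob_norm X" by (simp add: frob_norm_cadj)
  finally show ?thesis .
qed

lemma frob_prod2:
  assumes X1: "unitary_mat n X1" and X2: "unitary_mat n X2"
    and Y1: "unitary_mat n Y1" and Y2: "unitary_mat n Y2"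
  shows "frob_norm (X1 * X2 - Y1 * Y2) \<le> frob_norm (X1 - Y1) + frob_norm (X2 - Y2)"
proof -
  have c: "X1 \<in> carrier_mat n n" "X2 \<in> carrier_mat n n" "Y1 \<in> carrier_mat n n" "Y2 \<in> carrier_mat n n"
    using X1 X2 Y1 Y2 unitary_carrier by auto
  have e: "X1 * X2 - Y1 * Y2 = (X1 - Y1) * X2 + Y1 * (X2 - Y2)"
    using c by (intro eq_matI) (auto simp: minus_mult_distrib_mat[of _ n n] mult_minus_distrib_mat[of _ n n])
  have "frob_norm (X1 * X2 - Y1 * Y2) \<le> frob_norm ((X1 - Y1) * X2) + frob_norm (Y1 * (X2 - Y2))"
    unfolding e using c by (intro frob_norm_triangle) auto
  also have "frob_norm ((X1 - Y1) * X2) = frob_norm (X1 - Y1)"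
    using c by (intro frob_norm_unitary_right[OF X2]) auto
  also have "frob_norm (Y1 * (X2 - Y2)) = frob_norm (X2 - Y2)"
    using c by (intro frob_norm_unitary_left[OF Y1]) auto
  finally show ?thesis .
qed


definition NN :: "nat \<Rightarrow> nat" where "NN m = 6*m+1"
definition zeta :: "nat \<Rightarrow> complex" where "zeta m = cis (2*pi / real (NN m))"
definition omg :: complex where "omg = cis (2*pi/3)"
definition lam :: "nat \<Rightarrow> nat \<Rightarrow> complex" where
  "lam m j = (if j = 2*m then omg else if j = 3*m then -1 else zeta m ^ j)"
definition sig :: "nat \<Rightarrow> nat \<Rightarrow> nat" where "sig m j = (3*(3*m+1)*j) mod NN m"

lemma NN_pos: "NN m > 0" unfolding NN_def by simp

lemma sig_lt: "sig m j < NN m" unfolding sig_def using NN_pos by simp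

lemma sig_0: "sig m 0 = 0" unfolding sig_def by simp

lemma sig_2m: assumes "m \<ge> 1" shows "sig m (2*m) = 3*m"
proof -
  have "3*(3*m+1)*(2*m) = 3*m + (3*m) * NN m" unfolding NN_def by (simp add: algebra_simps)
  then have "sig m (2*m) = (3*m + (3*m) * NN m) mod NN m" unfolding sig_def by simp
  also have "\<dots> = (3*m) mod NN m" by (rule mod_mult_self1)
  also have "\<dots> = 3*m" using assms unfolding NN_def by simp
  finally show ?thesis .
qed

lemma sig_inv: assumes "j < NN m" shows "((8*m+2) * sig m j) mod NN m = j"
proof -
  have "((8*m+2) * sig m j) mod NN m = ((8*m+2) * (3*(3*m+1)*j)) mod NN m"
    unfolding sig_def by (rule mod_mult_right_eq)
  also have "(8*m+2) * (3*(3*m+1)*j) = j + ((12*m+5)*j) * NN m"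
    unfolding NN_def by (simp add: algebra_simps)
  also have "(j + ((12*m+5)*j) * NN m) mod NN m = j mod NN m" by (rule mod_mult_self1)
  also have "\<dots> = j" using assms by simp
  finally show ?thesis .
qed

lemma sig_inj: "inj_on (sig m) {..<NN m}"
  by (rule inj_on_inverseI[where g = "\<lambda>k. ((8*m+2) * k) mod NN m"]) (metis lessThan_iff sig_inv)

lemma sig_bij: "bij_betw (sig m) {..<NN m} {..<NN m}"
proof -
  have "sig m ` {..<NN m} \<subseteq> {..<NN m}" using sig_lt by auto
  moreover have "card (sig m ` {..<NN m}) = card {..<NN m}" using card_image[OF sig_inj] .
  ultimately have "sig m ` {..<NN m} = {..<NN m}" by (intro card_subset_eq) auto
  then show ?thesis using sig_inj unfolding bij_betw_def by simp
qed

lemma sig_double: "(2 * sig m j) mod NN m = (3*j) mod NN m"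
proof -
  have "(2 * sig m j) mod NN m = (2 * (3*(3*m+1)*j)) mod NN m"
    unfolding sig_def by (rule mod_mult_right_eq)
  also have "2 * (3*(3*m+1)*j) = 3*j + (3*j) * NN m" unfolding NN_def by (simp add: algebra_simps)
  also have "(3*j + (3*j) * NN m) mod NN m = (3*j) mod NN m" by (rule mod_mult_self1)
  finally show ?thesis .
qed

lemma zeta_pow: "zeta m ^ k = cis (real k * (2*pi / real (NN m)))"
  unfolding zeta_def by (simp add: DeMoivre)

lemma zeta_N: "zeta m ^ NN m = 1"
  unfolding zeta_pow using NN_pos[of m] by simp

lemma zeta_mod: "zeta m ^ k = zeta m ^ (k mod NN m)"
proof -
  have "zeta m ^ k = zeta m ^ (NN m * (k div NN m) + k mod NN m)" by simp
  also have "\<dots> = (zeta m ^ NN m) ^ (k div NN m) * zeta m ^ (k mod NN m)"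
    by (simp only: power_add power_mult)
  finally show ?thesis by (simp add: zeta_N)
qed

lemma zeta_grid: "(zeta m ^ sig m j)^2 = (zeta m ^ j)^3"
proof -
  have "(zeta m ^ sig m j)^2 = zeta m ^ (2 * sig m j)" by (simp add: power_mult[symmetric] mult.commute)
  also have "\<dots> = zeta m ^ (3 * j)" using zeta_mod sig_double by metis
  also have "\<dots> = (zeta m ^ j)^3" by (simp add: power_mult[symmetric] mult.commute)
  finally show ?thesis .
qed

lemma norm_zeta_pow[simp]: "cmod (zeta m ^ k) = 1" unfolding zeta_pow by simp

lemma omg3: "omg ^ 3 = 1"
  unfolding omg_def DeMoivre by simp

lemma norm_omg[simp]: "cmod omg = 1" unfolding omg_def by simp

lemma norm_lam[simp]: "cmod (lam m j) = 1" unfolding lam_def by simp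

lemma lam_0: "m \<ge> 1 \<Longrightarrow> lam m 0 = 1" unfolding lam_def by simp
lemma lam_2m: "lam m (2*m) = omg" unfolding lam_def by simp
lemma lam_3m: "m \<ge> 1 \<Longrightarrow> lam m (3*m) = -1" unfolding lam_def by simp

lemma cis_dist: "cmod (cis x - cis y) \<le> \<bar>x - y\<bar>"
proof -
  have e: "cis x - cis y = cis y * (cis (x - y) - 1)"
    by (simp add: algebra_simps cis_mult)
  have "cmod (cis (x - y) - 1) \<le> \<bar>x - y\<bar>"
  proof -
    define t where "t = x - y"
    have "(cmod (cis t - 1))^2 = (cos t - 1)^2 + (sin t)^2"
      by (simp add: cmod_power2)
    also have "\<dots> = 2 - 2 * cos t" using sin_cos_squared_add[of t] by (simp add: power2_eq_square algebra_simps)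
    also have "cos t = 1 - 2 * sin (t/2) ^ 2" using cos_double_sin[of "t/2"] by simp
    also have "2 - 2 * (1 - 2 * sin (t/2) ^ 2) = 4 * (sin (t/2))^2" by simp
    also have "\<dots> \<le> 4 * (t/2)^2"
    proof -
      have "\<bar>sin (t/2)\<bar> \<le> \<bar>t/2\<bar>" by (rule abs_sin_x_le_abs_x)
      then have "(sin (t/2))^2 \<le> (t/2)^2" by (metis abs_le_square_iff)
      then show ?thesis by simp
    qed
    also have "\<dots> = t^2" by (simp add: power2_eq_square)
    finally have "(cmod (cis t - 1))^2 \<le> t^2" .
    then show ?thesis unfolding t_def by (metis abs_le_square_iff abs_norm_cancel)
  qed
  then show ?thesis unfolding e by (simp add: norm_mult)
qed

lemma a2m_bound: "cmod (lam m (2*m) - zeta m ^ (2*m)) \<le> 2*pi / (3 * real (NN m))"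
proof -
  have "cmod (lam m (2*m) - zeta m ^ (2*m)) = cmod (cis (2*pi/3) - cis (real (2*m) * (2*pi / real (NN m))))"
    unfolding lam_2m omg_def zeta_pow ..
  also have "\<dots> \<le> \<bar>2*pi/3 - real (2*m) * (2*pi / real (NN m))\<bar>" by (rule cis_dist)
  also have "2*pi/3 - real (2*m) * (2*pi / real (NN m)) = 2*pi / (3 * real (NN m))"
    unfolding NN_def by (simp add: field_simps)
  finally show ?thesis by simp
qed

lemma a3m_bound: assumes "m \<ge> 1" shows "cmod (lam m (3*m) - zeta m ^ (3*m)) \<le> pi / real (NN m)"
proof -
  have "cmod (lam m (3*m) - zeta m ^ (3*m)) = cmod (cis pi - cis (real (3*m) * (2*pi / real (NN m))))"
    unfolding lam_3m[OF assms] zeta_pow by simp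
  also have "\<dots> \<le> \<bar>pi - real (3*m) * (2*pi / real (NN m))\<bar>" by (rule cis_dist)
  also have "pi - real (3*m) * (2*pi / real (NN m)) = pi / real (NN m)"
    unfolding NN_def by (simp add: field_simps)
  finally show ?thesis by simp
qed


definition rr :: complex where "rr = complex_of_real (1 / sqrt 2)"

lemma rr_sq: "rr * rr = 1/2"
proof -
  have "rr * rr = complex_of_real (1 / sqrt 2 * (1 / sqrt 2))" unfolding rr_def of_real_mult ..
  also have "1 / sqrt 2 * (1 / sqrt 2) = (1/2 :: real)" by (simp add: field_simps)
  finally show ?thesis by simp
qed

lemma cnj_rr[simp]: "cnj rr = rr" unfolding rr_def by simp

definition Bent :: "nat \<Rightarrow> nat \<Rightarrow> nat \<Rightarrow> complex" where
  "Bent m i j = (if j = 0 then (if i = 0 \<or> i = 3*m then rr else 0)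
     else if j = 2*m then (if i = 0 then rr else if i = 3*m then - rr else 0)
     else if i = sig m j then 1 else 0)"

definition Bmat :: "nat \<Rightarrow> complex mat" where
  "Bmat m = mat (NN m) (NN m) (\<lambda>(i,j). Bent m i j)"

definition Amat :: "nat \<Rightarrow> complex mat" where
  "Amat m = dmat (NN m) (lam m)"

lemma Bmat_carrier[simp]: "Bmat m \<in> carrier_mat (NN m) (NN m)" unfolding Bmat_def by simp
lemma Bmat_dims[simp]: "dim_row (Bmat m) = NN m" "dim_col (Bmat m) = NN m" unfolding Bmat_def by simp_all
lemma Bmat_index[simp]: "i < NN m \<Longrightarrow> j < NN m \<Longrightarrow> Bmat m $$ (i,j) = Bent m i j"
  unfolding Bmat_def by simp

lemma sum_one:
  fixes n :: nat
  assumes "a < n" "\<And>k. k < n \<Longrightarrow> k \<noteq> a \<Longrightarrow> f k = 0"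
  shows "(\<Sum>k<n. f k) = f a"
proof -
  have "(\<Sum>k<n. f k) = (\<Sum>k\<in>{a}. f k)"
    using assms by (intro sum.mono_neutral_right) auto
  then show ?thesis by simp
qed

lemma sum_two:
  fixes n :: nat
  assumes "a < n" "b < n" "a \<noteq> b" "\<And>k. k < n \<Longrightarrow> k \<noteq> a \<Longrightarrow> k \<noteq> b \<Longrightarrow> f k = 0"
  shows "(\<Sum>k<n. f k) = f a + f b"
proof -
  have "(\<Sum>k<n. f k) = (\<Sum>k\<in>{a,b}. f k)"
    using assms by (intro sum.mono_neutral_right) auto
  then show ?thesis using assms(3) by simp
qed

context
  fixes m :: nat
  assumes m1: "m \<ge> 1"
begin

lemma idx_facts: "0 < NN m" "2*m < NN m" "3*m < NN m" "0 \<noteq> 2*m" "0 \<noteq> 3*m" "2*m \<noteq> 3*m"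
  using m1 unfolding NN_def by auto

lemma sig_eq_0: "j < NN m \<Longrightarrow> sig m j = 0 \<longleftrightarrow> j = 0"
  using inj_onD[OF sig_inj[of m], of j 0] sig_0[of m] idx_facts by auto

lemma sig_eq_3m: "j < NN m \<Longrightarrow> sig m j = 3*m \<longleftrightarrow> j = 2*m"
  using inj_onD[OF sig_inj[of m], of j "2*m"] sig_2m[OF m1] idx_facts by auto

lemma sig_eq_iff: "i < NN m \<Longrightarrow> j < NN m \<Longrightarrow> sig m i = sig m j \<longleftrightarrow> i = j"
  using inj_onD[OF sig_inj[of m], of i j] by auto

lemma Bent_generic: "j \<noteq> 0 \<Longrightarrow> j \<noteq> 2*m \<Longrightarrow> Bent m i j = (if i = sig m j then 1 else 0)"
  unfolding Bent_def by simp

lemma Bent_special_zero: "j = 0 \<or> j = 2*m \<Longrightarrow> i \<noteq> 0 \<Longrightarrow> i \<noteq> 3*m \<Longrightarrow> Bent m i j = 0"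
  unfolding Bent_def by auto

lemma B_orth:
  assumes i: "i < NN m" and j: "j < NN m"
  shows "(\<Sum>k<NN m. cnj (Bent m k i) * Bent m k j) = (if i = j then 1 else 0)"
proof (cases "i = 0 \<or> i = 2*m")
  case False
  then have "(\<Sum>k<NN m. cnj (Bent m k i) * Bent m k j) = cnj (Bent m (sig m i) i) * Bent m (sig m i) j"
    by (intro sum_one) (auto simp: Bent_generic sig_lt)
  also have "\<dots> = Bent m (sig m i) j" using False by (simp add: Bent_generic)
  also have "\<dots> = (if i = j then 1 else 0)"
    using False i j sig_eq_0[OF i] sig_eq_3m[OF i] sig_eq_iff[OF i j] unfolding Bent_def by auto
  finally show ?thesis .
next
  case True
  have "(\<Sum>k<NN m. cnj (Bent m k i) * Bent m k j) = cnj (Bent m 0 i) * Bent m 0 j + cnj (Bent m (3*m) i) * Bent m (3*m) j"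
    by (intro sum_two) (use idx_facts True Bent_special_zero in auto)
  also have "\<dots> = (if i = j then 1 else 0)"
  proof (cases "j = 0 \<or> j = 2*m")
    case False
    have "Bent m 0 j = 0" "Bent m (3*m) j = 0"
      using False sig_eq_0[OF j] sig_eq_3m[OF j] by (auto simp: Bent_generic)
    then show ?thesis using True False by auto
  next
    case True2: True
    have b: "Bent m 0 0 = rr" "Bent m (3*m) 0 = rr" "Bent m 0 (2*m) = rr" "Bent m (3*m) (2*m) = - rr"
      using idx_facts unfolding Bent_def by auto
    have r2: "rr * rr + rr * rr = 1" unfolding rr_sq by simp
    from True show ?thesis
    proof
      assume i0: "i = 0"
      from True2 show ?thesis
      proof
        assume "j = 0" then show ?thesis using i0 b r2 by simp
      next
        assume "j = 2*m" then show ?thesis using i0 b idx_facts by simp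
      qed
    next
      assume i0: "i = 2*m"
      from True2 show ?thesis
      proof
        assume "j = 0" then show ?thesis using i0 b idx_facts by simp
      next
        assume "j = 2*m" then show ?thesis using i0 b r2 by simp
      qed
    qed
  qed
  finally show ?thesis .
qed

lemma B_unitary: "unitary_mat (NN m) (Bmat m)"
proof -
  have c: "Bmat m \<in> carrier_mat (NN m) (NN m)" by simp
  have 1: "cadj (Bmat m) * Bmat m = 1\<^sub>m (NN m)"
  proof (intro eq_matI)
    fix i j assume "i < dim_row (1\<^sub>m (NN m))" "j < dim_col (1\<^sub>m (NN m))"
    then have i: "i < NN m" and j: "j < NN m" by auto
    have "(cadj (Bmat m) * Bmat m) $$ (i,j) = (\<Sum>k<NN m. cadj (Bmat m) $$ (i,k) * Bmat m $$ (k,j))"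
      using i j by (intro mult_mat_index_sum[of _ "NN m" "NN m"]) auto
    also have "\<dots> = (\<Sum>k<NN m. cnj (Bent m k i) * Bent m k j)"
      using i j by (intro sum.cong refl) auto
    also have "\<dots> = 1\<^sub>m (NN m) $$ (i,j)" using B_orth[OF i j] i j by simp
    finally show "(cadj (Bmat m) * Bmat m) $$ (i,j) = 1\<^sub>m (NN m) $$ (i,j)" .
  qed auto
  have 2: "Bmat m * cadj (Bmat m) = 1\<^sub>m (NN m)"
    by (rule mat_mult_left_right_inverse[OF _ c 1]) simp
  show ?thesis unfolding unitary_mat_def using 1 2 c by simp
qed

lemma A_unitary: "unitary_mat (NN m) (Amat m)"
proof -
  have c: "Amat m \<in> carrier_mat (NN m) (NN m)" unfolding Amat_def by simp
  have ad: "cadj (Amat m) = dmat (NN m) (\<lambda>i. cnj (lam m i))"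
    unfolding Amat_def by (intro eq_matI) auto
  have "lam m i * cnj (lam m i) = 1" for i
    using norm_lam[of m i] by (metis complex_norm_square mult.commute of_real_1 power_one)
  then have e1: "(\<lambda>i. lam m i * cnj (lam m i)) = (\<lambda>i. 1)" "(\<lambda>i. cnj (lam m i) * lam m i) = (\<lambda>i. 1)"
    by (auto simp: mult.commute)
  have dd: "dmat n d * dmat n e = dmat n (\<lambda>i. d i * e i)" for n d e
  proof (intro eq_matI)
    fix i j assume "i < dim_row (dmat n (\<lambda>i. d i * e i))" "j < dim_col (dmat n (\<lambda>i. d i * e i))"
    then have i: "i < n" and j: "j < n" by auto
    show "(dmat n d * dmat n e) $$ (i, j) = dmat n (\<lambda>i. d i * e i) $$ (i, j)"
      using dmat_mult_left[OF dmat_carrier[of n e] i j, of d] i j by simp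
  qed auto
  have one: "dmat n (\<lambda>i. 1) = 1\<^sub>m n" for n by (intro eq_matI) auto
  show ?thesis unfolding unitary_mat_def ad using c
    by (simp add: Amat_def dd e1 one)
qed

end


lemma Amat_carrier[simp]: "Amat m \<in> carrier_mat (NN m) (NN m)" unfolding Amat_def by simp
lemma Amat_dims[simp]: "dim_row (Amat m) = NN m" "dim_col (Amat m) = NN m" unfolding Amat_def by simp_all

lemma dmat_mult_dmat: "dmat n d * dmat n e = dmat n (\<lambda>i. d i * e i)"
proof (intro eq_matI)
  fix i j assume "i < dim_row (dmat n (\<lambda>i. d i * e i))" "j < dim_col (dmat n (\<lambda>i. d i * e i))"
  then have i: "i < n" and j: "j < n" by auto
  show "(dmat n d * dmat n e) $$ (i, j) = dmat n (\<lambda>i. d i * e i) $$ (i, j)"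
    using dmat_mult_left[OF dmat_carrier[of n e] i j, of d] i j by simp
qed auto

lemma word_identity:
  assumes UA: "unitary_mat n A" and UB: "unitary_mat n B"
  shows "frob_norm (cadj B * (A * (A * (B * (cadj A * (cadj A * (cadj A * 1\<^sub>m n)))))) - 1\<^sub>m n)
       = frob_norm (A * A * B - B * (A * A * A))"
proof -
  have A: "A \<in> carrier_mat n n" and B: "B \<in> carrier_mat n n" using UA UB unitary_carrier by auto
  have Aa: "cadj A \<in> carrier_mat n n" and Ba: "cadj B \<in> carrier_mat n n" using A B by auto
  from UA UB have AA: "A * cadj A = 1\<^sub>m n" and BB: "cadj B * B = 1\<^sub>m n"
    unfolding unitary_mat_def by auto
  have dims: "dim_row A = n" "dim_col A = n" "dim_row B = n" "dim_col B = n" using A B by auto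
  have canA: "A * (cadj A * X) = X" if "dim_row X = n" for X
  proof -
    have "A * (cadj A * X) = (A * cadj A) * X" using that by (simp add: assoc_dim dims)
    then show ?thesis unfolding AA using that by simp
  qed
  have canB: "cadj B * (B * X) = X" if "dim_row X = n" for X
  proof -
    have "cadj B * (B * X) = (cadj B * B) * X" using that by (simp add: assoc_dim dims)
    then show ?thesis unfolding BB using that by simp
  qed
  define M where "M = A * A * B - B * (A * A * A)"
  define V where "V = cadj A * cadj A * cadj A"
  have AAB: "A * A * B \<in> carrier_mat n n" using A B by (meson mult_carrier_mat)
  have BAAA: "B * (A * A * A) \<in> carrier_mat n n" using A B by (meson mult_carrier_mat)
  have Vc: "V \<in> carrier_mat n n" unfolding V_def using Aa by (meson mult_carrier_mat)
  have UV: "unitary_mat n V" unfolding V_def using unitary_mult unitary_cadj UA by metis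
  have UBa: "unitary_mat n (cadj B)" using unitary_cadj UB by metis
  have Mc: "M \<in> carrier_mat n n" unfolding M_def using BAAA by (rule minus_carrier_mat)
  have "cadj B * M * V = cadj B * (A * A * B) * V - cadj B * (B * (A * A * A)) * V"
  proof -
    have "cadj B * M = cadj B * (A * A * B) - cadj B * (B * (A * A * A))"
      unfolding M_def by (rule mult_minus_distrib_mat[OF Ba AAB BAAA])
    then show ?thesis
      using minus_mult_distrib_mat[OF mult_carrier_mat[OF Ba AAB] mult_carrier_mat[OF Ba BAAA] Vc] by simp
  qed
  also have "cadj B * (A * A * B) * V = cadj B * (A * (A * (B * (cadj A * (cadj A * (cadj A * 1\<^sub>m n))))))"
    unfolding V_def by (simp add: assoc_dim dims)
  also have "cadj B * (B * (A * A * A)) * V = 1\<^sub>m n"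
    unfolding V_def by (simp add: assoc_dim dims canA canB AA)
  finally have e: "cadj B * M * V = cadj B * (A * (A * (B * (cadj A * (cadj A * (cadj A * 1\<^sub>m n)))))) - 1\<^sub>m n" .
  have "frob_norm (cadj B * M * V) = frob_norm (cadj B * M)"
    by (rule frob_norm_unitary_right[OF UV, of "cadj B * M" n]) (use Ba Mc in simp)
  also have "\<dots> = frob_norm M" by (rule frob_norm_unitary_left[OF UBa Mc])
  finally have "frob_norm (cadj B * M * V) = frob_norm M" .
  from this[unfolded e] show ?thesis unfolding M_def .
qed

lemma sq_diff_bound:
  fixes x y :: complex
  assumes "cmod x = 1" "cmod y = 1"
  shows "cmod (x^2 - y^2) \<le> 2 * cmod (x - y)"
proof -
  have "x^2 - y^2 = (x - y) * (x + y)" by (simp add: power2_eq_square algebra_simps)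
  then have "cmod (x^2 - y^2) = cmod (x - y) * cmod (x + y)" by (simp add: norm_mult)
  also have "cmod (x + y) \<le> 2" using norm_triangle_ineq[of x y] assms by simp
  then have "cmod (x - y) * cmod (x + y) \<le> cmod (x - y) * 2" by (intro mult_left_mono) auto
  finally show ?thesis by simp
qed

lemma cube_diff_bound:
  fixes x y :: complex
  assumes "cmod x = 1" "cmod y = 1"
  shows "cmod (x^3 - y^3) \<le> 3 * cmod (x - y)"
proof -
  have "x^3 - y^3 = (x - y) * (x*x + x*y + y*y)" by (simp add: power3_eq_cube algebra_simps)
  then have "cmod (x^3 - y^3) = cmod (x - y) * cmod (x*x + x*y + y*y)" by (simp add: norm_mult)
  also have "cmod (x*x + x*y + y*y) \<le> 3"
  proof -
    have "cmod (x*x + x*y + y*y) \<le> cmod (x*x) + cmod (x*y) + cmod (y*y)"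
      by (meson norm_triangle_ineq order_trans add_mono order_refl)
    also have "\<dots> = 3" using assms by (simp add: norm_mult)
    finally show ?thesis .
  qed
  then have "cmod (x - y) * cmod (x*x + x*y + y*y) \<le> cmod (x - y) * 3" by (intro mult_left_mono) auto
  finally show ?thesis by simp
qed

context
  fixes m :: nat
  assumes m1: "m \<ge> 1"
begin

definition aa :: "nat \<Rightarrow> real" where "aa k = cmod (lam m k - zeta m ^ k)"

lemma aa_nonneg: "aa k \<ge> 0" unfolding aa_def by simp

lemma aa_zero: "k \<noteq> 2*m \<Longrightarrow> k \<noteq> 3*m \<Longrightarrow> aa k = 0"
  unfolding aa_def lam_def by simp

lemma term_bound: "cmod ((lam m (sig m j))^2 - (lam m j)^3) \<le> 2 * aa (sig m j) + 3 * aa j"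
proof -
  let ?x = "lam m (sig m j)" and ?zx = "zeta m ^ sig m j" and ?y = "lam m j" and ?zy = "zeta m ^ j"
  have "?x^2 - ?y^3 = (?x^2 - ?zx^2) + (?zy^3 - ?y^3)" using zeta_grid[of m j] by simp
  then have "cmod (?x^2 - ?y^3) \<le> cmod (?x^2 - ?zx^2) + cmod (?zy^3 - ?y^3)"
    by (metis norm_triangle_ineq)
  also have "cmod (?x^2 - ?zx^2) \<le> 2 * aa (sig m j)" unfolding aa_def by (rule sq_diff_bound) auto
  also have "cmod (?zy^3 - ?y^3) \<le> 3 * aa j"
  proof -
    have "cmod (?zy^3 - ?y^3) = cmod (?y^3 - ?zy^3)" by (simp add: norm_minus_commute)
    also have "\<dots> \<le> 3 * aa j" unfolding aa_def by (rule cube_diff_bound) auto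
    finally show ?thesis .
  qed
  finally show ?thesis by simp
qed

lemma sum_terms_bound:
  "(\<Sum>j<NN m. (cmod ((lam m (sig m j))^2 - (lam m j)^3))^2) \<le> 25 * ((aa (2*m))^2 + (aa (3*m))^2)"
proof -
  have "(\<Sum>j<NN m. (cmod ((lam m (sig m j))^2 - (lam m j)^3))^2)
      \<le> (\<Sum>j<NN m. 10 * (aa (sig m j))^2 + 15 * (aa j)^2)"
  proof (intro sum_mono)
    fix j
    let ?a = "aa (sig m j)" and ?b = "aa j"
    have "(cmod ((lam m (sig m j))^2 - (lam m j)^3))^2 \<le> (2 * ?a + 3 * ?b)^2"
      using term_bound[of j] by (intro power_mono) auto
    also have "(2 * ?a + 3 * ?b)^2 = 10 * ?a^2 + 15 * ?b^2 - 6 * (?a - ?b)^2"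
      by (simp add: power2_eq_square algebra_simps)
    also have "\<dots> \<le> 10 * ?a^2 + 15 * ?b^2" by simp
    finally show "(cmod ((lam m (sig m j))^2 - (lam m j)^3))^2 \<le> 10 * ?a^2 + 15 * ?b^2" .
  qed
  also have "\<dots> = 10 * (\<Sum>j<NN m. (aa (sig m j))^2) + 15 * (\<Sum>j<NN m. (aa j)^2)"
    by (simp add: sum.distrib sum_distrib_left)
  also have "(\<Sum>j<NN m. (aa (sig m j))^2) = (\<Sum>j<NN m. (aa j)^2)"
    using sum.reindex_bij_betw[OF sig_bij[of m], of "\<lambda>k. (aa k)^2"] by simp
  also have "(\<Sum>j<NN m. (aa j)^2) = (aa (2*m))^2 + (aa (3*m))^2"
    by (rule sum_two) (use idx_facts[OF m1] aa_zero in auto)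
  finally show ?thesis by simp
qed

lemma column_sum:
  assumes j: "j < NN m"
  shows "(\<Sum>i<NN m. (cmod (Bent m i j))^2 * (cmod ((lam m i)^2 - (lam m j)^3))^2)
       = (cmod ((lam m (sig m j))^2 - (lam m j)^3))^2"
proof (cases "j = 0 \<or> j = 2*m")
  case False
  have "(\<Sum>i<NN m. (cmod (Bent m i j))^2 * (cmod ((lam m i)^2 - (lam m j)^3))^2)
      = (cmod (Bent m (sig m j) j))^2 * (cmod ((lam m (sig m j))^2 - (lam m j)^3))^2"
    by (intro sum_one) (use False in \<open>auto simp: Bent_generic[OF m1] sig_lt\<close>)
  then show ?thesis using False by (simp add: Bent_generic[OF m1])
next
  case True
  have l3: "(lam m j)^3 = 1" using True lam_0[OF m1] lam_2m[of m] omg3 by auto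
  have l0: "(lam m 0)^2 = 1" using lam_0[OF m1] by simp
  have l3m: "(lam m (3*m))^2 = 1" using lam_3m[OF m1] by simp
  have s: "sig m j = 0 \<or> sig m j = 3*m" using True sig_0 sig_2m[OF m1] by auto
  have "(\<Sum>i<NN m. (cmod (Bent m i j))^2 * (cmod ((lam m i)^2 - (lam m j)^3))^2)
      = (cmod (Bent m 0 j))^2 * (cmod ((lam m 0)^2 - (lam m j)^3))^2
        + (cmod (Bent m (3*m) j))^2 * (cmod ((lam m (3*m))^2 - (lam m j)^3))^2"
    by (intro sum_two) (use idx_facts[OF m1] True Bent_special_zero[OF m1] in auto)
  also have "\<dots> = 0" using l3 l0 l3m by simp
  also have "0 = (cmod ((lam m (sig m j))^2 - (lam m j)^3))^2" using s l3 l0 l3m by auto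
  finally show ?thesis .
qed

lemma defect_matrix_bound:
  "frob_norm (Amat m * Amat m * Bmat m - Bmat m * (Amat m * Amat m * Amat m)) \<le> 8 * pi / real (NN m)"
proof -
  let ?N = "NN m"
  let ?M = "Amat m * Amat m * Bmat m - Bmat m * (Amat m * Amat m * Amat m)"
  have A2: "Amat m * Amat m = dmat ?N (\<lambda>i. (lam m i)^2)"
    unfolding Amat_def dmat_mult_dmat by (simp add: power2_eq_square)
  have A3: "Amat m * Amat m * Amat m = dmat ?N (\<lambda>i. (lam m i)^3)"
    unfolding A2 unfolding Amat_def dmat_mult_dmat by (simp add: power2_eq_square power3_eq_cube)
  have ent: "?M $$ (i,j) = Bent m i j * ((lam m i)^2 - (lam m j)^3)" if i: "i < ?N" and j: "j < ?N" for i j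
  proof -
    have "?M $$ (i,j) = (dmat ?N (\<lambda>i. (lam m i)^2) * Bmat m) $$ (i,j) - (Bmat m * dmat ?N (\<lambda>i. (lam m i)^3)) $$ (i,j)"
      unfolding A3 unfolding A2 using i j by simp
    also have "\<dots> = (lam m i)^2 * Bent m i j - Bent m i j * (lam m j)^3"
      using dmat_mult_left[OF Bmat_carrier i j] dmat_mult_right[OF Bmat_carrier i j] i j by simp
    finally show ?thesis by (simp add: algebra_simps)
  qed
  have dM: "dim_row ?M = ?N" "dim_col ?M = ?N" by simp_all
  have "(frob_norm ?M)^2 = (\<Sum>i<?N. \<Sum>j<?N. (cmod (?M $$ (i,j)))^2)"
    unfolding frob_norm_sq dM ..
  also have "\<dots> = (\<Sum>i<?N. \<Sum>j<?N. (cmod (Bent m i j))^2 * (cmod ((lam m i)^2 - (lam m j)^3))^2)"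
  proof (intro sum.cong refl)
    fix i j assume "i \<in> {..<?N}" "j \<in> {..<?N}"
    then have i: "i < ?N" and j: "j < ?N" by auto
    show "(cmod (?M $$ (i,j)))^2 = (cmod (Bent m i j))^2 * (cmod ((lam m i)^2 - (lam m j)^3))^2"
      unfolding ent[OF i j] norm_mult power_mult_distrib ..
  qed
  also have "\<dots> = (\<Sum>j<?N. \<Sum>i<?N. (cmod (Bent m i j))^2 * (cmod ((lam m i)^2 - (lam m j)^3))^2)"
    by (rule sum.swap)
  also have "\<dots> = (\<Sum>j<?N. (cmod ((lam m (sig m j))^2 - (lam m j)^3))^2)"
    by (intro sum.cong refl) (simp add: column_sum)
  also have "\<dots> \<le> 25 * ((aa (2*m))^2 + (aa (3*m))^2)" by (rule sum_terms_bound)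
  also have "\<dots> \<le> 25 * ((2*pi / (3 * real ?N))^2 + (pi / real ?N)^2)"
  proof -
    have "(aa (2*m))^2 \<le> (2*pi / (3 * real ?N))^2"
      using a2m_bound[of m] aa_nonneg[of "2*m"] unfolding aa_def by (intro power_mono) auto
    moreover have "(aa (3*m))^2 \<le> (pi / real ?N)^2"
      using a3m_bound[OF m1] aa_nonneg[of "3*m"] unfolding aa_def by (intro power_mono) auto
    ultimately show ?thesis by simp
  qed
  also have "\<dots> \<le> (8 * pi / real ?N)^2"
  proof -
    have Npos: "real ?N > 0" using NN_pos[of m] by simp
    have "25 * ((2*pi / (3 * real ?N))^2 + (pi / real ?N)^2) = (325/9) * (pi / real ?N)^2"
      by (simp add: power2_eq_square field_simps)
    also have "\<dots> \<le> 64 * (pi / real ?N)^2" by (intro mult_right_mono) auto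
    also have "\<dots> = (8 * pi / real ?N)^2" by (simp add: power2_eq_square field_simps)
    finally show ?thesis .
  qed
  finally have "(frob_norm ?M)^2 \<le> (8 * pi / real ?N)^2" .
  then show ?thesis by (rule power2_le_imp_le) simp
qed

lemma commutator_entry:
  "cmod ((Amat m * (cadj (Bmat m) * Amat m * Bmat m) - (cadj (Bmat m) * Amat m * Bmat m) * Amat m) $$ (0, 2*m)) \<ge> 1"
proof -
  let ?N = "NN m"
  let ?C = "cadj (Bmat m) * Amat m * Bmat m"
  have idx: "0 < ?N" "2*m < ?N" "3*m < ?N" "0 \<noteq> 3*m" using idx_facts[OF m1] by auto
  have Ac: "Amat m \<in> carrier_mat ?N ?N" unfolding Amat_def by simp
  have BA: "cadj (Bmat m) * Amat m \<in> carrier_mat ?N ?N" using Ac by (meson mult_carrier_mat cadj_carrier Bmat_carrier)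
  have Cc: "?C \<in> carrier_mat ?N ?N" using BA by (meson mult_carrier_mat Bmat_carrier)
  have BAe: "(cadj (Bmat m) * Amat m) $$ (i,k) = cnj (Bent m k i) * lam m k" if "i < ?N" "k < ?N" for i k
    using dmat_mult_right[of "cadj (Bmat m)" ?N ?N i k "lam m"] that unfolding Amat_def by simp
  have C02: "?C $$ (0, 2*m) = 1"
  proof -
    have "?C $$ (0, 2*m) = (\<Sum>k<?N. (cadj (Bmat m) * Amat m) $$ (0,k) * Bmat m $$ (k, 2*m))"
      using idx by (intro mult_mat_index_sum[OF BA Bmat_carrier]) auto
    also have "\<dots> = (\<Sum>k<?N. cnj (Bent m k 0) * lam m k * Bent m k (2*m))"
    proof (intro sum.cong refl)
      fix k assume "k \<in> {..<?N}"
      then have k: "k < ?N" by simp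
      show "(cadj (Bmat m) * Amat m) $$ (0,k) * Bmat m $$ (k, 2*m) = cnj (Bent m k 0) * lam m k * Bent m k (2*m)"
        unfolding BAe[OF idx(1) k] using k idx by simp
    qed
    also have "\<dots> = cnj (Bent m 0 0) * lam m 0 * Bent m 0 (2*m) + cnj (Bent m (3*m) 0) * lam m (3*m) * Bent m (3*m) (2*m)"
      by (intro sum_two) (use idx Bent_special_zero[OF m1] in auto)
    also have "\<dots> = rr * rr + rr * rr"
      using idx lam_0[OF m1] lam_3m[OF m1] unfolding Bent_def by simp
    also have "\<dots> = 1" unfolding rr_sq by simp
    finally show ?thesis .
  qed
  have "(Amat m * ?C - ?C * Amat m) $$ (0, 2*m) = (Amat m * ?C) $$ (0, 2*m) - (?C * Amat m) $$ (0, 2*m)"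
    using idx Cc Ac by simp
  also have "(Amat m * ?C) $$ (0, 2*m) = lam m 0 * ?C $$ (0, 2*m)"
    using dmat_mult_left[OF Cc, of 0 "2*m" "lam m"] idx unfolding Amat_def by simp
  also have "(?C * Amat m) $$ (0, 2*m) = ?C $$ (0, 2*m) * lam m (2*m)"
    using dmat_mult_right[OF Cc, of 0 "2*m" "lam m"] idx unfolding Amat_def by simp
  finally have e: "(Amat m * ?C - ?C * Amat m) $$ (0, 2*m) = 1 - omg"
    using C02 lam_0[OF m1] lam_2m[of m] by simp
  have "Re (1 - omg) = 3/2" unfolding omg_def using cos_120 by simp
  then have "1 \<le> \<bar>Re (1 - omg)\<bar>" by simp
  also have "\<dots> \<le> cmod (1 - omg)" by (rule abs_Re_le_cmod)
  finally show ?thesis unfolding e .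
qed

end


lemma word_eval_rel:
  "word_eval k \<phi> bs23_rel = cadj (\<phi> Gb) * (\<phi> Ga * (\<phi> Ga * (\<phi> Gb * (cadj (\<phi> Ga) * (cadj (\<phi> Ga) * (cadj (\<phi> Ga) * 1\<^sub>m k))))))"
  unfolding word_eval_def bs23_rel_def by simp

lemma defect_rel:
  "defect k [bs23_rel] \<phi> = frob_norm (word_eval k \<phi> bs23_rel - 1\<^sub>m k)"
  unfolding defect_def using frob_norm_nonneg by (simp add: max_def)

lemma hom_relation:
  assumes UA: "unitary_mat n A" and UB: "unitary_mat n B"
  and w: "cadj B * (A * (A * (B * (cadj A * (cadj A * (cadj A * 1\<^sub>m n)))))) = 1\<^sub>m n"
  shows "cadj B * (A * A) * B = A * A * A"
proof -
  have A: "A \<in> carrier_mat n n" and B: "B \<in> carrier_mat n n" using UA UB unitary_carrier by auto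
  from UA have AA: "cadj A * A = 1\<^sub>m n" unfolding unitary_mat_def by auto
  have dims: "dim_row A = n" "dim_col A = n" "dim_row B = n" "dim_col B = n" using A B by auto
  have canA: "cadj A * (A * X) = X" if "dim_row X = n" for X
  proof -
    have "cadj A * (A * X) = (cadj A * A) * X" using that by (simp add: assoc_dim dims)
    then show ?thesis unfolding AA using that by simp
  qed
  have "cadj B * (A * (A * (B * (cadj A * (cadj A * (cadj A * 1\<^sub>m n)))))) * (A * A * A) = A * A * A"
    unfolding w using A by (simp add: dims)
  moreover have "cadj B * (A * (A * (B * (cadj A * (cadj A * (cadj A * 1\<^sub>m n)))))) * (A * A * A)
      = cadj B * (A * A) * B"
    by (simp add: assoc_dim dims canA AA)
  ultimately show ?thesis by simp
qed

lemma homdist_lower: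
  assumes m1: "m \<ge> 1"
  and \<phi>a: "\<phi> Ga = Amat m" and \<phi>b: "\<phi> Gb = Bmat m"
  shows "homdist (NN m) {Ga, Gb} [bs23_rel] \<phi> \<ge> 1/8"
proof -
  let ?N = "NN m"
  let ?S = "{Max (insert 0 ((\<lambda>s. frob_norm (\<phi> s - \<rho> s)) ` {Ga, Gb})) | \<rho>. is_hom ?N {Ga, Gb} [bs23_rel] \<rho>}"
  have UA: "unitary_mat ?N (Amat m)" by (rule A_unitary[OF m1])
  have UB: "unitary_mat ?N (Bmat m)" by (rule B_unitary[OF m1])
  have ne: "?S \<noteq> {}"
  proof -
    have "is_hom ?N {Ga, Gb} [bs23_rel] (\<lambda>_. 1\<^sub>m ?N)"
      unfolding is_hom_def using unitary_one by (simp add: word_eval_rel)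
    then show ?thesis by blast
  qed
  have lb: "1/8 \<le> x" if "x \<in> ?S" for x
  proof -
    from that obtain \<rho> where x: "x = Max (insert 0 ((\<lambda>s. frob_norm (\<phi> s - \<rho> s)) ` {Ga, Gb}))"
      and h: "is_hom ?N {Ga, Gb} [bs23_rel] \<rho>" by blast
    define A' where "A' = \<rho> Ga"
    define B' where "B' = \<rho> Gb"
    have UA': "unitary_mat ?N A'" and UB': "unitary_mat ?N B'"
      using h unfolding is_hom_def A'_def B'_def by auto
    have w: "word_eval ?N \<rho> bs23_rel = 1\<^sub>m ?N" using h unfolding is_hom_def by auto
    have rel: "cadj B' * (A' * A') * B' = A' * A' * A'"
      by (rule hom_relation[OF UA' UB']) (use w in \<open>simp add: word_eval_rel A'_def B'_def\<close>)
    define C where "C = cadj (Bmat m) * Amat m * Bmat m"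
    define C' where "C' = cadj B' * A' * B'"
    have comm: "A' * C' = C' * A'" unfolding C'_def by (rule bs_commute[OF UA' UB' rel])
    define a where "a = frob_norm (Amat m - A')"
    define b where "b = frob_norm (Bmat m - B')"
    have UBa: "unitary_mat ?N (cadj (Bmat m))" and UBa': "unitary_mat ?N (cadj B')"
      using unitary_cadj UB UB' by auto
    have UC: "unitary_mat ?N C" unfolding C_def using unitary_mult UBa UA UB by metis
    have UC': "unitary_mat ?N C'" unfolding C'_def using unitary_mult UBa' UA' UB' by metis
    have Ac: "Amat m \<in> carrier_mat ?N ?N" and A'c: "A' \<in> carrier_mat ?N ?N"
      and Bc: "Bmat m \<in> carrier_mat ?N ?N" and B'c: "B' \<in> carrier_mat ?N ?N"
      and Cc: "C \<in> carrier_mat ?N ?N" and C'c: "C' \<in> carrier_mat ?N ?N"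
      using UA UA' UB UB' UC UC' unitary_carrier by auto
    have "cadj (Bmat m) - cadj B' = cadj (Bmat m - B')"
      by (rule cadj_minus[symmetric]) (use Bc B'c in auto)
    then have fcadj: "frob_norm (cadj (Bmat m) - cadj B') = b"
      unfolding b_def by (simp add: frob_norm_cadj)
    have fCC: "frob_norm (C - C') \<le> a + 2 * b"
    proof -
      have UBA: "unitary_mat ?N (cadj (Bmat m) * Amat m)" using unitary_mult UBa UA by metis
      have UBA': "unitary_mat ?N (cadj B' * A')" using unitary_mult UBa' UA' by metis
      have "frob_norm (C - C') \<le> frob_norm (cadj (Bmat m) * Amat m - cadj B' * A') + b"
        unfolding C_def C'_def b_def by (rule frob_prod2[OF UBA UB UBA' UB'])
      also have "frob_norm (cadj (Bmat m) * Amat m - cadj B' * A') \<le> b + a"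
        using frob_prod2[OF UBa UA UBa' UA'] unfolding fcadj a_def .
      finally show ?thesis by simp
    qed
    have e: "Amat m * C - C * Amat m = (Amat m * C - A' * C') - (C * Amat m - C' * A')"
      using Ac A'c Cc C'c comm by (intro eq_matI) auto
    have "1 \<le> cmod ((Amat m * C - C * Amat m) $$ (0, 2*m))"
      unfolding C_def by (rule commutator_entry[OF m1])
    also have "\<dots> \<le> frob_norm (Amat m * C - C * Amat m)"
      by (rule frob_norm_entry) (use idx_facts[OF m1] Ac Cc in auto)
    also have "\<dots> \<le> frob_norm (Amat m * C - A' * C') + frob_norm (C * Amat m - C' * A')"
      unfolding e by (rule frob_norm_minus_triangle) (use Ac A'c Cc C'c in auto)
    also have "frob_norm (Amat m * C - A' * C') \<le> a + (a + 2 * b)"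
      using frob_prod2[OF UA UC UA' UC'] fCC unfolding a_def by simp
    also have "frob_norm (C * Amat m - C' * A') \<le> (a + 2 * b) + a"
      using frob_prod2[OF UC UA UC' UA'] fCC unfolding a_def by simp
    finally have s: "1 \<le> 4 * a + 4 * b" by simp
    have "x = Max {0, a, b}" unfolding x a_def b_def using \<phi>a \<phi>b A'_def B'_def
      by (simp add: insert_commute)
    also have "Max {0, a, b} = max 0 (max a b)" by simp
    finally have "x \<ge> a" "x \<ge> b" by auto
    then show ?thesis using s by simp
  qed
  show ?thesis unfolding homdist_def
    by (rule cInf_greatest[OF ne]) (use lb in blast)
qed


definition phis :: "nat \<Rightarrow> bs_gen \<Rightarrow> complex mat" where
  "phis n g = (case g of Ga \<Rightarrow> Amat (Suc n) | Gb \<Rightarrow> Bmat (Suc n))"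

lemma ultra_le_seq:
  assumes U: "nonprincipal_ultrafilter U"
  shows "U \<le> sequentially"
proof (rule filter_leI)
  fix P assume "eventually P sequentially"
  then obtain N where N: "\<And>n. n \<ge> N \<Longrightarrow> P n" unfolding eventually_sequentially by blast
  from U have "\<forall>y\<in>{..<N}. eventually (\<lambda>x. x \<noteq> y) U" unfolding nonprincipal_ultrafilter_def by blast
  then have "eventually (\<lambda>x. \<forall>y\<in>{..<N}. x \<noteq> y) U" by (rule eventually_ball_finite[rotated]) simp
  then show "eventually P U"
  proof (rule eventually_mono)
    fix x assume "\<forall>y\<in>{..<N}. x \<noteq> y"
    then have "x \<ge> N" by (metis lessThan_iff not_le)
    then show "P x" by (rule N)
  qed
qed

lemma defect_phis: "defect (NN (Suc n)) [bs23_rel] (phis n) \<le> 8 * pi / real (NN (Suc n))"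
proof -
  have m1: "Suc n \<ge> 1" by simp
  have "defect (NN (Suc n)) [bs23_rel] (phis n)
      = frob_norm (Amat (Suc n) * Amat (Suc n) * Bmat (Suc n) - Bmat (Suc n) * (Amat (Suc n) * Amat (Suc n) * Amat (Suc n)))"
    unfolding defect_rel word_eval_rel phis_def
    using word_identity[OF A_unitary[OF m1] B_unitary[OF m1]] by simp
  also have "\<dots> \<le> 8 * pi / real (NN (Suc n))" by (rule defect_matrix_bound[OF m1])
  finally show ?thesis .
qed

theorem theorem2p3:
  fixes U :: "nat filter"
  assumes "nonprincipal_ultrafilter U"
  shows "\<not> frobenius_stable U {Ga, Gb} [bs23_rel]"
proof
  assume st: "frobenius_stable U {Ga, Gb} [bs23_rel]"
  define ks where "ks n = NN (Suc n)" for n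
  have prem1: "\<forall>n. ks n \<ge> 1 \<and> (\<forall>s\<in>{Ga, Gb}. unitary_mat (ks n) (phis n s))"
  proof (intro allI conjI ballI)
    fix n
    show "ks n \<ge> 1" unfolding ks_def NN_def by simp
    fix s assume "s \<in> {Ga, Gb}"
    moreover have "Suc n \<ge> 1" by simp
    ultimately show "unitary_mat (ks n) (phis n s)"
      unfolding ks_def phis_def using A_unitary B_unitary by auto
  qed
  have dnn: "0 \<le> defect (ks n) [bs23_rel] (phis n)" for n
    unfolding defect_rel by (rule frob_norm_nonneg)
  have dle: "defect (ks n) [bs23_rel] (phis n) \<le> 8 * pi * inverse (real (Suc n))" for n
  proof -
    have "defect (ks n) [bs23_rel] (phis n) \<le> 8 * pi / real (NN (Suc n))"
      unfolding ks_def by (rule defect_phis)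
    also have "\<dots> \<le> 8 * pi / real (Suc n)"
      by (intro divide_left_mono) (auto simp: NN_def)
    finally show ?thesis by (simp add: divide_inverse)
  qed
  have hl: "(\<lambda>n. 8 * pi * inverse (real (Suc n))) \<longlonglongrightarrow> 0"
    using tendsto_mult_right_zero[OF LIMSEQ_inverse_real_of_nat, of "8 * pi"] by simp
  have "(\<lambda>n. defect (ks n) [bs23_rel] (phis n)) \<longlonglongrightarrow> 0"
    by (rule tendsto_sandwich[of "\<lambda>_. 0" _ sequentially "\<lambda>n. 8 * pi * inverse (real (Suc n))" 0,
          OF _ _ tendsto_const hl]) (use dnn dle in auto)
  then have limU: "((\<lambda>n. defect (ks n) [bs23_rel] (phis n)) \<longlongrightarrow> 0) U"
    by (rule tendsto_mono[OF ultra_le_seq[OF assms]])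
  have "((\<lambda>n. homdist (ks n) {Ga, Gb} [bs23_rel] (phis n)) \<longlongrightarrow> 0) U"
    using st prem1 limU unfolding frobenius_stable_def by blast
  then have ev: "eventually (\<lambda>n. homdist (ks n) {Ga, Gb} [bs23_rel] (phis n) < 1/8) U"
    by (rule order_tendstoD(2)) simp
  have hb: "homdist (ks n) {Ga, Gb} [bs23_rel] (phis n) \<ge> 1/8" for n
    unfolding ks_def by (rule homdist_lower) (auto simp: phis_def)
  have "eventually (\<lambda>n. False) U"
    using ev by (rule eventually_mono) (use hb in \<open>metis not_le\<close>)
  then show False using assms unfolding nonprincipal_ultrafilter_def by (simp add: eventually_False)
qed


end
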